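(* Let $(X_n)_{n\ge0}$ be the Kendall random walk with step distribution $\nu\in\mathcal P_s$, $\nu(\{0\})=0$, let $\tau_a^+=\min\{n\ge1:X_n>a\}$, and let $t>a>0$ with $\nu(\{a\})=\nu(\{t\})=0$ and $G(t)\ne2G(a)$. Write $D=2G(a)-G(t)$ and $\Phi^a_n(t)=\mathbb P(X_{\tau_a^+}\le t,\ \tau_a^+=n)$. Then $\Phi^a_1(t)=F(t)-F(a)$, and for $n\ge2$ $$\begin{aligned}\Phi^a_n(t)={}&\Big(\frac{G(t)}2\Big)^{n-1}\Big[\frac{2G(a)H(a)(G(t)-G(a))}{D^2}-\frac{G(a)^2}{D}+\frac{(n-1)C_1H(t)}{G(t)}-\frac{G(a)H(t)}{D}\Big(C_3-\frac{C_2G(t)}{D}\Big)+II(1,a,t)\Big]\\ &+G(a)^{n-1}\Big[\frac{(nH(a)+G(a))(G(t)-G(a))}{D}-\frac{G(a)G(t)H(a)}{D^2}+\frac{G(a)H(t)C_2n}{D}\\&\qquad+\frac{G(t)H(t)}{D}\Big(\frac{C_3-C_2}2-\frac{G(a)C_2}{D}\Big)+\frac{H(t)(C_3-C_2)}2\Big],\end{aligned}$$ where $II(1,a,t)=\frac12(H(a)+H(t)+G(a)+G(t))$, $I(1,a,t)=\tfrac12G(t)+\tfrac12H(a)\Psi(\tfrac at)+\tfrac12G(a)$, $C_1=I(1,a,t)-\frac{G(a)}{D}\big[G(a)+H(a)\Psi(\frac at)(1-\frac{G(t)}{D})\big]$, $C_2=\frac{H(a)\Psi(\frac at)}{D}$,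 $C_3=\frac{H(a)\Psi(\frac at)+G(a)}{D}-\frac{2H(a)G(a)\Psi(\frac at)}{D^2}$.
   Context: Fix $\alpha>0$. $\mathcal P_s$ is the set of symmetric Borel probability measures on $\mathbb R$. For $x\in\mathbb R$, $\widetilde\delta_x=\frac12(\delta_x+\delta_{-x})$. For a probability measure $\lambda=\mathcal L(X)$ and $c>0$, $T_c\lambda=\mathcal L(cX)$, and $T_0\lambda=\delta_0$. $\widetilde\pi_{2\alpha}$ is the symmetric Pareto probability measure with density $\alpha|y|^{-2\alpha-1}\mathbf 1_{\{|y|\ge1\}}$. The Kendall convolution $\vartriangle_\alpha$ on $\mathcal P_s$ is defined by $\widetilde\delta_x\vartriangle_\alpha\widetilde\delta_y=T_M\big(\varrho^\alpha\widetilde\pi_{2\alpha}+(1-\varrho^\alpha)\widetilde\delta_1\big)$ where $M=\max(|x|,|y|)$, $m=\min(|x|,|y|)$, $\varrho=m/M$ (and $\varrho=0$ if $M=0$), extended by $(\nu_1\vartriangle_\alpha\nu_2)(A)=\int\int(\widetilde\delta_x\vartriangle_\alpha\widetilde\delta_y)(A)\,\nu_1(dx)\nu_2(dy)$. For $x\in\mathbb R$ and $\mu\in\mathcal P_s$ we write $\delta_x\vartriangle_\alpha\mu:=\widetilde\delta_x\vartriangle_\alpha\mu$. $\Psi(t)=(1-|t|^\alpha)_+$. For the measure $\nu$: $F(t)=\nu((-\infty,t])$, $G(t)=\int_{\mathbb R}\Psi(x/t)\,\nu(dx)$ for $t\neq0$, and for $t>0$, $H(t)=2F(t)-1-G(t)=t^{-\alpha}\int_{[-t,t]}|x|^\alpha\nu(dx)$.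 The Kendall random walk with step distribution $\nu$ is the Markov chain $(X_n)_{n\ge0}$ with $X_0=0$ and transition kernel $\mathbb P(X_{k+1}\in A\mid X_k=x)=(\delta_x\vartriangle_\alpha\nu)(A)$. *)

theory Defs
  imports "HOL-Probability.Probability"
begin

definition sym_pareto :: "real \<Rightarrow> real measure" where
  "sym_pareto \<alpha> = density lborel
     (\<lambda>y. ennreal (\<alpha> * \<bar>y\<bar> powr (-2*\<alpha>-1) * indicator {y. \<bar>y\<bar> \<ge> 1} y))"

definition sdelta :: "real \<Rightarrow> real set \<Rightarrow> real" where
  "sdelta x A = (indicator A x + indicator A (-x)) / 2"

text \<open>Value on the set A of the Kendall convolution of the symmetrised Diracs at x and y:
  T_M (rho^alpha pi_{2 alpha} + (1 - rho^alpha) sdelta_1), with T_0 lambda = delta_0.\<close>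
definition kendall_basic :: "real \<Rightarrow> real \<Rightarrow> real \<Rightarrow> real set \<Rightarrow> real" where
  "kendall_basic \<alpha> x y A =
     (let M = max \<bar>x\<bar> \<bar>y\<bar>; m = min \<bar>x\<bar> \<bar>y\<bar>;
          \<rho> = (if M = 0 then 0 else m / M);
          P = {z. M * z \<in> A}
      in if M = 0 then indicator A 0
         else \<rho> powr \<alpha> * measure (sym_pareto \<alpha>) P + (1 - \<rho> powr \<alpha>) * sdelta 1 P)"

text \<open>Transition kernel of the Kendall random walk: x maps to delta_x Kendall-convolved with nu.\<close>
definition kendall_kernel :: "real \<Rightarrow> real measure \<Rightarrow> real \<Rightarrow> real measure" where
  "kendall_kernel \<alpha> \<nu> x = measure_of UNIV (sets borel)
     (\<lambda>A. ennreal (\<integral>y. kendall_basic \<alpha> x y A \<partial>\<nu>))"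

text \<open>Sub-probability measure A maps to P(X_1 <= a, ..., X_k <= a, X_k in A) for the walk
  started at X_0 = 0.\<close>
fun below_meas :: "real \<Rightarrow> real measure \<Rightarrow> real \<Rightarrow> nat \<Rightarrow> real measure" where
  "below_meas \<alpha> \<nu> a 0 = return borel 0"
| "below_meas \<alpha> \<nu> a (Suc k) = measure_of UNIV (sets borel)
     (\<lambda>A. \<integral>\<^sup>+ x. emeasure (kendall_kernel \<alpha> \<nu> x) (A \<inter> {..a}) \<partial>(below_meas \<alpha> \<nu> a k))"

text \<open>Phi^a_n(t) = P(X_{tau_a^+} <= t, tau_a^+ = n), tau_a^+ = min{n >= 1 : X_n > a}.\<close>
definition Phi :: "real \<Rightarrow> real measure \<Rightarrow> real \<Rightarrow> nat \<Rightarrow> real \<Rightarrow> real" where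
  "Phi \<alpha> \<nu> a n t = (\<integral>x. measure (kendall_kernel \<alpha> \<nu> x) {a<..t} \<partial>(below_meas \<alpha> \<nu> a (n - 1)))"

definition Psi :: "real \<Rightarrow> real \<Rightarrow> real" where
  "Psi \<alpha> s = max 0 (1 - \<bar>s\<bar> powr \<alpha>)"

definition Fd :: "real measure \<Rightarrow> real \<Rightarrow> real" where
  "Fd \<nu> t = measure \<nu> {..t}"

definition Gd :: "real \<Rightarrow> real measure \<Rightarrow> real \<Rightarrow> real" where
  "Gd \<alpha> \<nu> t = (\<integral>x. Psi \<alpha> (x / t) \<partial>\<nu>)"

definition Hd :: "real \<Rightarrow> real measure \<Rightarrow> real \<Rightarrow> real" where
  "Hd \<alpha> \<nu> t = 2 * Fd \<nu> t - 1 - Gd \<alpha> \<nu> t"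

end

theory Submission
  imports Defs
begin

definition pd :: "real \<Rightarrow> real \<Rightarrow> real" where
  "pd \<alpha> y = \<alpha> * \<bar>y\<bar> powr (-2*\<alpha>-1) * indicator {y. \<bar>y\<bar> \<ge> 1} y"

lemma pd_nonneg: "\<alpha> > 0 \<Longrightarrow> 0 \<le> pd \<alpha> y"
  by (simp add: pd_def)

lemma pd_meas[measurable]: "pd \<alpha> \<in> borel_measurable borel"
  unfolding pd_def by measurable

lemma sym_pareto_pd: "sym_pareto \<alpha> = density lborel (\<lambda>y. ennreal (pd \<alpha> y))"
  by (simp add: sym_pareto_def pd_def)

lemma sets_sp[simp, measurable_cong]: "sets (sym_pareto \<alpha>) = sets borel"
  by (simp add: sym_pareto_def)

lemma space_sp[simp]: "space (sym_pareto \<alpha>) = UNIV"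
  by (simp add: sym_pareto_def)

lemma pi_half:
  assumes a: "\<alpha> > 0" and h[measurable]: "h \<in> borel_measurable borel"
  shows "(\<integral>\<^sup>+ y. ennreal (pd \<alpha> y) * h y \<partial>lborel) =
    (\<integral>\<^sup>+ y. ennreal (\<alpha> * y powr (-2*\<alpha>-1)) * indicator {1..} y * (h y + h (-y)) \<partial>lborel)"
proof -
  let ?q = "\<lambda>y. ennreal (\<alpha> * y powr (-2*\<alpha>-1)) * indicator {1..} y"
  have "(\<integral>\<^sup>+ y. ennreal (pd \<alpha> y) * h y \<partial>lborel) =
     (\<integral>\<^sup>+ y. ?q y * h y + ?q (-y) * h y \<partial>lborel)"
  proof (rule nn_integral_cong)
    fix y :: real
    show "ennreal (pd \<alpha> y) * h y = ?q y * h y + ?q (-y) * h y"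
      by (cases "y \<ge> 1"; cases "y \<le> -1") (auto simp: pd_def indicator_def)
  qed
  also have "\<dots> = (\<integral>\<^sup>+ y. ?q y * h y \<partial>lborel) + (\<integral>\<^sup>+ y. ?q (-y) * h y \<partial>lborel)"
    by (rule nn_integral_add) auto
  also have "(\<integral>\<^sup>+ y. ?q (-y) * h y \<partial>lborel) = (\<integral>\<^sup>+ y. ?q y * h (-y) \<partial>lborel)"
    using nn_integral_real_affine[of "\<lambda>y. ?q (-y) * h y" "-1" 0] by simp
  also have "(\<integral>\<^sup>+ y. ?q y * h y \<partial>lborel) + (\<integral>\<^sup>+ y. ?q y * h (-y) \<partial>lborel)
      = (\<integral>\<^sup>+ y. ?q y * h y + ?q y * h (-y) \<partial>lborel)"
    by (rule nn_integral_add[symmetric]) auto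
  also have "\<dots> = (\<integral>\<^sup>+ y. ?q y * (h y + h (-y)) \<partial>lborel)"
    by (simp add: distrib_left)
  finally show ?thesis .
qed

lemma FTC1:
  assumes d: "d \<ge> 1" and b: "\<beta> > 0"
  shows "(\<integral>\<^sup>+ y. ennreal (\<beta> * y powr (-\<beta>-1)) * indicator {1..d} y \<partial>lborel) = ennreal (1 - d powr (-\<beta>))"
proof -
  have "((\<lambda>y. \<beta> * y powr (-\<beta>-1)) has_integral ((- (d powr (-\<beta>))) - (- ((1::real) powr (-\<beta>))))) {1..d}"
  proof (rule fundamental_theorem_of_calculus)
    show "1 \<le> d" by fact
    fix x assume x: "x \<in> {1..d}"
    then have "x > 0" by auto
    have "((\<lambda>y. - (y powr (-\<beta>))) has_real_derivative (- ((-\<beta>) * x powr (-\<beta> - 1)))) (at x)"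
      by (rule DERIV_minus, rule has_real_derivative_powr) fact
    then show "((\<lambda>y. - (y powr (-\<beta>))) has_vector_derivative \<beta> * x powr (-\<beta>-1)) (at x within {1..d})"
      by (simp add: has_real_derivative_iff_has_vector_derivative[symmetric] has_field_derivative_at_within)
  qed
  then have "((\<lambda>y. if y \<in> {1..d} then \<beta> * y powr (-\<beta>-1) else 0) has_integral (1 - d powr (-\<beta>))) UNIV"
    using has_integral_restrict_UNIV[of "{1..d}" "\<lambda>y. \<beta> * y powr (-\<beta>-1)"] by simp
  then have I: "((\<lambda>y. \<beta> * y powr (-\<beta>-1) * indicator {1..d} y) has_integral (1 - d powr (-\<beta>))) UNIV"
    by (rule has_integral_eq[rotated]) (simp add: indicator_def)
  have "(\<integral>\<^sup>+ y. ennreal (\<beta> * y powr (-\<beta>-1) * indicator {1..d} y) \<partial>lborel) = ennreal (1 - d powr (-\<beta>))"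
    by (rule nn_integral_has_integral_lborel[OF _ _ I]) (use b in auto)
  moreover have "(\<lambda>y. ennreal (\<beta> * y powr (-\<beta>-1) * indicator {1..d} y)) = (\<lambda>y. ennreal (\<beta> * y powr (-\<beta>-1)) * indicator {1..d} y)"
    by (auto simp: indicator_def fun_eq_iff)
  ultimately show ?thesis by simp
qed

lemma FTC2:
  assumes b: "\<beta> > 0"
  shows "(\<integral>\<^sup>+ y. ennreal (\<beta> * y powr (-\<beta>-1)) * indicator {1..} y \<partial>lborel) = 1"
proof -
  have "(\<integral>\<^sup>+ y. ennreal (\<beta> * y powr (-\<beta>-1)) * indicator {1..} y \<partial>lborel) = ennreal (0 - (- ((1::real) powr (-\<beta>))))"
  proof (rule nn_integral_FTC_atLeast)
    show "(\<lambda>y. \<beta> * y powr (-\<beta>-1)) \<in> borel_measurable borel" by measurable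
    fix x :: real assume x: "1 \<le> x"
    then have "x > 0" by auto
    have "((\<lambda>y. - (y powr (-\<beta>))) has_real_derivative (- ((-\<beta>) * x powr (-\<beta> - 1)))) (at x)"
      by (rule DERIV_minus, rule has_real_derivative_powr) fact
    then show "((\<lambda>y. - (y powr (-\<beta>))) has_real_derivative \<beta> * x powr (-\<beta>-1)) (at x)" by simp
    show "0 \<le> \<beta> * x powr (-\<beta>-1)" using b by simp
  next
    have "((\<lambda>y. y powr (-\<beta>)) \<longlongrightarrow> 0) at_top"
      using b by (intro tendsto_neg_powr filterlim_ident) auto
    then show "((\<lambda>y. - (y powr (-\<beta>))) \<longlongrightarrow> 0) at_top"
      using tendsto_minus by fastforce
  qed
  then show ?thesis by simp
qed

definition e0 :: "real \<Rightarrow> real \<Rightarrow> real" where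
  "e0 c w = (if \<bar>w\<bar> \<le> c then 1 else 0)"

definition e1 :: "real \<Rightarrow> real \<Rightarrow> real \<Rightarrow> real" where
  "e1 \<alpha> c w = (if \<bar>w\<bar> \<le> c then (\<bar>w\<bar> / c) powr \<alpha> else 0)"

lemma e0_meas[measurable]: "e0 c \<in> borel_measurable borel"
  unfolding e0_def by measurable

lemma e1_meas[measurable]: "e1 \<alpha> c \<in> borel_measurable borel"
  unfolding e1_def by measurable

lemma e0_bounds: "0 \<le> e0 c w" "e0 c w \<le> 1"
  by (auto simp: e0_def)

lemma e1_bounds: "0 \<le> e1 \<alpha> c w" "c > 0 \<Longrightarrow> \<alpha> > 0 \<Longrightarrow> e1 \<alpha> c w \<le> 1"
  by (auto simp: e1_def intro!: powr_le1)

lemma e0_even[simp]: "e0 c (-w) = e0 c w" by (simp add: e0_def)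
lemma e1_even[simp]: "e1 \<alpha> c (-w) = e1 \<alpha> c w" by (simp add: e1_def)

lemma pi_nn:
  assumes a: "\<alpha> > 0" and h[measurable]: "h \<in> borel_measurable borel"
  shows "(\<integral>\<^sup>+ y. h y \<partial>sym_pareto \<alpha>) =
    (\<integral>\<^sup>+ y. ennreal (\<alpha> * y powr (-2*\<alpha>-1)) * indicator {1..} y * (h y + h (-y)) \<partial>lborel)"
  unfolding sym_pareto_pd using pi_half[OF a h] by (simp add: nn_integral_density)

lemma sp_prob: assumes a: "\<alpha> > 0" shows "prob_space (sym_pareto \<alpha>)"
proof (rule prob_spaceI)
  have "emeasure (sym_pareto \<alpha>) (space (sym_pareto \<alpha>)) = (\<integral>\<^sup>+ y. 1 \<partial>sym_pareto \<alpha>)"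
    by simp
  also have "\<dots> = (\<integral>\<^sup>+ y. ennreal (\<alpha> * y powr (-2*\<alpha>-1)) * indicator {1..} y * (1 + 1) \<partial>lborel)"
    by (rule pi_nn[OF a]) simp
  also have "\<dots> = (\<integral>\<^sup>+ y. ennreal ((2*\<alpha>) * y powr (-(2*\<alpha>)-1)) * indicator {1..} y \<partial>lborel)"
  proof (rule nn_integral_cong)
    fix y :: real
    have e: "ennreal ((2*\<alpha>) * y powr (-(2*\<alpha>)-1)) = ennreal (\<alpha> * y powr (-2*\<alpha>-1)) * ennreal 2"
      using a by (subst ennreal_mult'[symmetric]) (auto simp: mult_ac)
    have "ennreal (\<alpha> * y powr (-2*\<alpha>-1)) * (1 + 1) = ennreal ((2*\<alpha>) * y powr (-(2*\<alpha>)-1))"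
      unfolding e by (simp add: one_add_one)
    then show "ennreal (\<alpha> * y powr (-2*\<alpha>-1)) * indicator {1..} y * (1 + 1) =
      ennreal ((2*\<alpha>) * y powr (-(2*\<alpha>)-1)) * indicator {1..} y"
      by (metis mult.assoc mult.commute)
  qed
  also have "\<dots> = 1" using a by (intro FTC2) auto
  finally show "emeasure (sym_pareto \<alpha>) (space (sym_pareto \<alpha>)) = 1" .
qed

lemma sp_sym: assumes a: "\<alpha> > 0" shows "distr (sym_pareto \<alpha>) borel uminus = sym_pareto \<alpha>"
proof (rule measure_eqI)
  show "sets (distr (sym_pareto \<alpha>) borel uminus) = sets (sym_pareto \<alpha>)" by simp
  fix A assume "A \<in> sets (distr (sym_pareto \<alpha>) borel uminus)"
  then have A[measurable]: "A \<in> sets borel" by simp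
  have [measurable]: "uminus -` A \<in> sets borel"
    by (rule measurable_sets_borel[OF _ A]) simp
  have "emeasure (distr (sym_pareto \<alpha>) borel uminus) A = emeasure (sym_pareto \<alpha>) (uminus -` A)"
    by (subst emeasure_distr) auto
  also have "\<dots> = (\<integral>\<^sup>+ y. indicator A (- y) \<partial>sym_pareto \<alpha>)"
  proof -
    have "emeasure (sym_pareto \<alpha>) (uminus -` A) = (\<integral>\<^sup>+ y. indicator (uminus -` A) y \<partial>sym_pareto \<alpha>)"
      by (rule nn_integral_indicator[symmetric]) simp
    also have "\<dots> = (\<integral>\<^sup>+ y. indicator A (- y) \<partial>sym_pareto \<alpha>)"
      by (rule nn_integral_cong) (simp add: indicator_def)
    finally show ?thesis .
  qed
  also have "\<dots> = (\<integral>\<^sup>+ y. ennreal (\<alpha> * y powr (-2*\<alpha>-1)) * indicator {1..} y * (indicator A (-y) + indicator A (- (-y))) \<partial>lborel)"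
    by (rule pi_nn[OF a]) measurable
  also have "\<dots> = (\<integral>\<^sup>+ y. ennreal (\<alpha> * y powr (-2*\<alpha>-1)) * indicator {1..} y * (indicator A y + indicator A (-y)) \<partial>lborel)"
    by (simp add: add.commute)
  also have "\<dots> = (\<integral>\<^sup>+ y. indicator A y \<partial>sym_pareto \<alpha>)"
    by (rule pi_nn[OF a, symmetric]) measurable
  also have "\<dots> = emeasure (sym_pareto \<alpha>) A"
    by simp
  finally show "emeasure (distr (sym_pareto \<alpha>) borel uminus) A = emeasure (sym_pareto \<alpha>) A" .
qed

lemma sp_int_sym:
  assumes a: "\<alpha> > 0" and h[measurable]: "h \<in> borel_measurable borel"
  shows "integral\<^sup>L (sym_pareto \<alpha>) (\<lambda>z. h (- z)) = integral\<^sup>L (sym_pareto \<alpha>) (h :: real \<Rightarrow> real)"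
proof -
  have "integral\<^sup>L (distr (sym_pareto \<alpha>) borel uminus) h = integral\<^sup>L (sym_pareto \<alpha>) (\<lambda>z. h (- z))"
    by (rule integral_distr) auto
  then show ?thesis using sp_sym[OF a] by simp
qed

lemma FTC1K:
  assumes d: "d \<ge> 1" and b: "\<beta> > 0" and K: "K \<ge> 0"
  shows "(\<integral>\<^sup>+ y. ennreal (K * (\<beta> * y powr (-\<beta>-1))) * indicator {1..d} y \<partial>lborel) = ennreal (K * (1 - d powr (-\<beta>)))"
proof -
  have "(\<integral>\<^sup>+ y. ennreal (K * (\<beta> * y powr (-\<beta>-1))) * indicator {1..d} y \<partial>lborel)
     = (\<integral>\<^sup>+ y. ennreal K * (ennreal (\<beta> * y powr (-\<beta>-1)) * indicator {1..d} y) \<partial>lborel)"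
    using K b by (intro nn_integral_cong) (simp add: ennreal_mult' mult.assoc)
  also have "\<dots> = ennreal K * (\<integral>\<^sup>+ y. ennreal (\<beta> * y powr (-\<beta>-1)) * indicator {1..d} y \<partial>lborel)"
    by (rule nn_integral_cmult) measurable
  also have "\<dots> = ennreal K * ennreal (1 - d powr (-\<beta>))"
    by (simp add: FTC1[OF d b])
  also have "\<dots> = ennreal (K * (1 - d powr (-\<beta>)))"
    using K by (simp add: ennreal_mult')
  finally show ?thesis .
qed

lemma powr_div_neg: "0 < (c::real) \<Longrightarrow> 0 < M \<Longrightarrow> (c/M) powr (-b) = (M/c) powr b"
proof -
  assume "0 < c" "0 < M"
  have "(c/M) powr (-b) = c powr (-b) / M powr (-b)" by (rule powr_divide)
  also have "\<dots> = M powr b / c powr b" by (simp add: powr_minus divide_inverse)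
  also have "\<dots> = (M/c) powr b" by (rule powr_divide[symmetric])
  finally show ?thesis .
qed

lemma pi_e0:
  assumes a: "\<alpha> > 0" and M: "M > 0" and c: "c > 0"
  shows "integral\<^sup>L (sym_pareto \<alpha>) (\<lambda>z. e0 c (M*z)) = (if M \<le> c then 1 - (M/c) powr (2*\<alpha>) else 0)"
proof -
  have "(\<integral>\<^sup>+ z. ennreal (e0 c (M*z)) \<partial>sym_pareto \<alpha>) =
     (\<integral>\<^sup>+ y. ennreal (\<alpha> * y powr (-2*\<alpha>-1)) * indicator {1..} y * (ennreal (e0 c (M*y)) + ennreal (e0 c (M*(-y)))) \<partial>lborel)"
    by (rule pi_nn[OF a]) measurable
  also have "\<dots> = (\<integral>\<^sup>+ y. ennreal (1 * ((2*\<alpha>) * y powr (-(2*\<alpha>)-1))) * indicator {1..c/M} y \<partial>lborel)"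
  proof (rule nn_integral_cong)
    fix y :: real
    have e: "ennreal ((2*\<alpha>) * y powr (-(2*\<alpha>)-1)) = ennreal (\<alpha> * y powr (-2*\<alpha>-1)) * ennreal 2"
      using a by (subst ennreal_mult'[symmetric]) (auto simp: mult_ac)
    show "ennreal (\<alpha> * y powr (-2*\<alpha>-1)) * indicator {1..} y * (ennreal (e0 c (M*y)) + ennreal (e0 c (M*(-y)))) =
      ennreal (1 * ((2*\<alpha>) * y powr (-(2*\<alpha>)-1))) * indicator {1..c/M} y"
    proof (cases "1 \<le> y \<and> y \<le> c/M")
      case True
      then have "e0 c (M*y) = 1" using M by (auto simp: e0_def pos_le_divide_eq mult.commute abs_mult)
      then show ?thesis using True by (simp add: e one_add_one)
    next
      case False
      then have "y < 1 \<or> (1 \<le> y \<and> y > c/M)" by auto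
      then show ?thesis
      proof
        assume "y < 1" then show ?thesis by simp
      next
        assume y: "1 \<le> y \<and> y > c/M"
        then have "e0 c (M*y) = 0" using M y by (auto simp: e0_def pos_divide_less_eq mult.commute abs_mult)
        then show ?thesis using y by simp
      qed
    qed
  qed
  also have "\<dots> = ennreal (if M \<le> c then 1 - (M/c) powr (2*\<alpha>) else 0)"
  proof (cases "M \<le> c")
    case True
    then have "c/M \<ge> 1" using M by simp
    then show ?thesis using True a M c by (subst FTC1K) (auto simp: powr_div_neg)
  next
    case False
    then have "{1..c/M} = {}" using M by (auto simp: divide_le_eq)
    then show ?thesis using False by simp
  qed
  finally have nn: "(\<integral>\<^sup>+ z. ennreal (e0 c (M*z)) \<partial>sym_pareto \<alpha>) = ennreal (if M \<le> c then 1 - (M/c) powr (2*\<alpha>) else 0)" .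
  have "integral\<^sup>L (sym_pareto \<alpha>) (\<lambda>z. e0 c (M*z)) = enn2real (\<integral>\<^sup>+ z. ennreal (e0 c (M*z)) \<partial>sym_pareto \<alpha>)"
    by (rule integral_eq_nn_integral) (auto simp: e0_bounds)
  also have "\<dots> = (if M \<le> c then 1 - (M/c) powr (2*\<alpha>) else 0)"
    unfolding nn using M c a by (auto intro!: enn2real_ennreal simp: powr_le1 divide_le_eq_1)
  finally show ?thesis .
qed

lemma pi_e1:
  assumes a: "\<alpha> > 0" and M: "M > 0" and c: "c > 0"
  shows "integral\<^sup>L (sym_pareto \<alpha>) (\<lambda>z. e1 \<alpha> c (M*z)) = (if M \<le> c then 2 * ((M/c) powr \<alpha> - (M/c) powr (2*\<alpha>)) else 0)"
proof -
  define K where "K = 2 * (M/c) powr \<alpha>"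
  have K0: "K \<ge> 0" by (simp add: K_def)
  have "(\<integral>\<^sup>+ z. ennreal (e1 \<alpha> c (M*z)) \<partial>sym_pareto \<alpha>) =
     (\<integral>\<^sup>+ y. ennreal (\<alpha> * y powr (-2*\<alpha>-1)) * indicator {1..} y * (ennreal (e1 \<alpha> c (M*y)) + ennreal (e1 \<alpha> c (M*(-y)))) \<partial>lborel)"
    by (rule pi_nn[OF a]) measurable
  also have "\<dots> = (\<integral>\<^sup>+ y. ennreal (K * (\<alpha> * y powr (-\<alpha>-1))) * indicator {1..c/M} y \<partial>lborel)"
  proof (rule nn_integral_cong)
    fix y :: real
    show "ennreal (\<alpha> * y powr (-2*\<alpha>-1)) * indicator {1..} y * (ennreal (e1 \<alpha> c (M*y)) + ennreal (e1 \<alpha> c (M*(-y)))) =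
      ennreal (K * (\<alpha> * y powr (-\<alpha>-1))) * indicator {1..c/M} y"
    proof (cases "1 \<le> y \<and> y \<le> c/M")
      case True
      then have y0: "y > 0" by auto
      have "M*y \<le> c" using True M by (simp add: pos_le_divide_eq mult.commute)
      then have ee: "e1 \<alpha> c (M*y) = (M/c) powr \<alpha> * y powr \<alpha>"
        using M y0 by (simp add: e1_def abs_mult powr_mult[symmetric])
      have r: "\<alpha> * y powr (-2*\<alpha>-1) * (2 * ((M/c) powr \<alpha> * y powr \<alpha>)) = K * (\<alpha> * y powr (-\<alpha>-1))"
      proof -
        have "y powr (-2*\<alpha>-1) * y powr \<alpha> = y powr (-\<alpha>-1)"
          using y0 by (simp add: powr_add[symmetric])
        then show ?thesis unfolding K_def by (simp add: algebra_simps)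
      qed
      have h1: "ennreal (\<alpha> * y powr (-2*\<alpha>-1)) * (ennreal (e1 \<alpha> c (M*y)) + ennreal (e1 \<alpha> c (M*y)))
          = ennreal (\<alpha> * y powr (-2*\<alpha>-1) * (2 * ((M/c) powr \<alpha> * y powr \<alpha>)))"
        unfolding ee using a by (simp add: ennreal_mult'[symmetric] ennreal_plus[symmetric] del: ennreal_plus)
      note h2 = h1[unfolded r]
      show ?thesis using True h2 by simp
    next
      case False
      then have "y < 1 \<or> (1 \<le> y \<and> y > c/M)" by auto
      then show ?thesis
      proof
        assume "y < 1" then show ?thesis by simp
      next
        assume y: "1 \<le> y \<and> y > c/M"
        then have "e1 \<alpha> c (M*y) = 0" using M y by (auto simp: e1_def pos_divide_less_eq mult.commute abs_mult)
        then show ?thesis using y by simp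
      qed
    qed
  qed
  also have "\<dots> = ennreal (if M \<le> c then 2 * ((M/c) powr \<alpha> - (M/c) powr (2*\<alpha>)) else 0)"
  proof (cases "M \<le> c")
    case True
    then have "c/M \<ge> 1" using M by simp
    moreover have "K * (1 - (c/M) powr (-\<alpha>)) = 2 * ((M/c) powr \<alpha> - (M/c) powr (2*\<alpha>))"
    proof -
      have q: "(M/c) powr (2*\<alpha>) = (M/c) powr \<alpha> * (M/c) powr \<alpha>" by (metis mult_2 powr_add)
      show ?thesis using M c unfolding K_def q by (simp only: powr_div_neg) (simp add: algebra_simps)
    qed
    ultimately show ?thesis using True a K0 by (subst FTC1K) auto
  next
    case False
    then have "{1..c/M} = {}" using M by (auto simp: divide_le_eq)
    then show ?thesis using False by simp
  qed
  finally have nn: "(\<integral>\<^sup>+ z. ennreal (e1 \<alpha> c (M*z)) \<partial>sym_pareto \<alpha>) = ennreal (if M \<le> c then 2 * ((M/c) powr \<alpha> - (M/c) powr (2*\<alpha>)) else 0)" .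
  have "integral\<^sup>L (sym_pareto \<alpha>) (\<lambda>z. e1 \<alpha> c (M*z)) = enn2real (\<integral>\<^sup>+ z. ennreal (e1 \<alpha> c (M*z)) \<partial>sym_pareto \<alpha>)"
    by (rule integral_eq_nn_integral) (auto simp: e1_bounds)
  also have "\<dots> = (if M \<le> c then 2 * ((M/c) powr \<alpha> - (M/c) powr (2*\<alpha>)) else 0)"
  proof -
    have "(M/c) powr (2*\<alpha>) \<le> (M/c) powr \<alpha>" if "M \<le> c"
      using that M c a by (intro powr_mono') auto
    then show ?thesis unfolding nn by auto
  qed
  finally show ?thesis .
qed

definition Mx :: "real \<Rightarrow> real \<Rightarrow> real" where "Mx x y = max \<bar>x\<bar> \<bar>y\<bar>"
definition rho :: "real \<Rightarrow> real \<Rightarrow> real \<Rightarrow> real" where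
  "rho \<alpha> x y = (min \<bar>x\<bar> \<bar>y\<bar> / Mx x y) powr \<alpha>"

definition coin :: "real \<Rightarrow> real measure" where
  "coin M = distr (measure_pmf (bernoulli_pmf (1/2))) borel (\<lambda>c. if c then M else -M)"

definition chooseK :: "real \<Rightarrow> real \<Rightarrow> bool \<Rightarrow> real measure" where
  "chooseK \<alpha> M b = (if b then distr (sym_pareto \<alpha>) borel (\<lambda>z. M*z) else coin M)"

definition kap :: "real \<Rightarrow> real \<Rightarrow> real \<Rightarrow> real measure" where
  "kap \<alpha> x y = (if Mx x y = 0 then return borel 0 else
     measure_pmf (bernoulli_pmf (rho \<alpha> x y)) \<bind> chooseK \<alpha> (Mx x y))"

lemma rho_bounds: "0 \<le> rho \<alpha> x y" "\<alpha> \<ge> 0 \<Longrightarrow> rho \<alpha> x y \<le> 1"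
  by (auto simp: rho_def Mx_def intro!: powr_le1 divide_le_eq_1 [THEN iffD2])

lemma sets_coin[simp]: "sets (coin M) = sets borel" by (simp add: coin_def)
lemma prob_coin: "prob_space (coin M)"
  unfolding coin_def by (intro prob_space.prob_space_distr prob_space_measure_pmf) auto

lemma sets_chooseK[simp]: "sets (chooseK \<alpha> M b) = sets borel" by (simp add: chooseK_def)
lemma prob_chooseK: "\<alpha> > 0 \<Longrightarrow> prob_space (chooseK \<alpha> M b)"
  unfolding chooseK_def using prob_coin sp_prob
  by (auto intro!: prob_space.prob_space_distr)

lemma chooseK_meas: "\<alpha> > 0 \<Longrightarrow> chooseK \<alpha> M \<in> measurable (measure_pmf p) (subprob_algebra borel)"
  using prob_chooseK by (auto simp: space_subprob_algebra prob_space_imp_subprob_space)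

lemma sets_kap[simp]: "sets (kap \<alpha> x y) = sets borel"
  by (simp add: kap_def)

lemma prob_kap: "\<alpha> > 0 \<Longrightarrow> prob_space (kap \<alpha> x y)"
  unfolding kap_def
  by (auto intro!: prob_space.prob_space_bind[where S=borel] prob_space_measure_pmf chooseK_meas prob_chooseK
           prob_space_return)

lemma kap_int:
  fixes g :: "real \<Rightarrow> real"
  assumes a: "\<alpha> > 0" and g[measurable]: "g \<in> borel_measurable borel" and gb: "\<And>z. \<bar>g z\<bar> \<le> B"
  shows "integral\<^sup>L (kap \<alpha> x y) g = (if Mx x y = 0 then g 0 else
     rho \<alpha> x y * integral\<^sup>L (sym_pareto \<alpha>) (\<lambda>z. g (Mx x y * z)) + (1 - rho \<alpha> x y) * ((g (Mx x y) + g (- Mx x y)) / 2))"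
proof (cases "Mx x y = 0")
  case True
  then show ?thesis by (simp add: kap_def integral_return)
next
  case False
  let ?M = "Mx x y" and ?r = "rho \<alpha> x y"
  have "integral\<^sup>L (kap \<alpha> x y) g = (\<integral>b. integral\<^sup>L (chooseK \<alpha> ?M b) g \<partial>measure_pmf (bernoulli_pmf ?r))"
    unfolding kap_def using False
    by (simp, intro integral_bind[where K=borel and B=B and B'=1] chooseK_meas a gb)
       (auto intro!: AE_I2 prob_space_measure_pmf prob_space.finite_measure
             simp: prob_space.emeasure_space_1[OF prob_chooseK[OF a]])
  also have "\<dots> = integral\<^sup>L (chooseK \<alpha> ?M True) g * ?r + integral\<^sup>L (chooseK \<alpha> ?M False) g * (1 - ?r)"
    using rho_bounds[of \<alpha> x y] a by simp
  also have "integral\<^sup>L (chooseK \<alpha> ?M True) g = integral\<^sup>L (sym_pareto \<alpha>) (\<lambda>z. g (?M * z))"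
    by (simp add: chooseK_def integral_distr)
  also have "integral\<^sup>L (chooseK \<alpha> ?M False) g = (g ?M + g (- ?M)) / 2"
    by (simp add: chooseK_def coin_def integral_distr)
  finally show ?thesis using False by (simp add: mult.commute)
qed

lemma kb_alt: "kendall_basic \<alpha> x y A = (if Mx x y = 0 then indicator A 0 else
   rho \<alpha> x y * measure (sym_pareto \<alpha>) {z. Mx x y * z \<in> A} +
   (1 - rho \<alpha> x y) * ((indicator A (Mx x y) + indicator A (- Mx x y)) / 2))"
  by (simp add: kendall_basic_def Let_def sdelta_def Mx_def rho_def indicator_def) (auto simp: max_def)

lemma kap_measure:
  assumes a: "\<alpha> > 0" and A[measurable]: "A \<in> sets borel"
  shows "measure (kap \<alpha> x y) A = kendall_basic \<alpha> x y A"
proof -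
  interpret prob_space "kap \<alpha> x y" by (rule prob_kap[OF a])
  have [measurable]: "{z. Mx x y * z \<in> A} \<in> sets borel"
    by measurable
  have "measure (kap \<alpha> x y) A = integral\<^sup>L (kap \<alpha> x y) (indicator A)"
    by (simp add: Int_absorb2)
  also have "\<dots> = kendall_basic \<alpha> x y A"
  proof -
    have e: "integral\<^sup>L (sym_pareto \<alpha>) (\<lambda>z. indicator A (Mx x y * z)) = measure (sym_pareto \<alpha>) {z. Mx x y * z \<in> A}"
    proof -
      have "(\<lambda>z. indicator A (Mx x y * z) :: real) = indicator {z. Mx x y * z \<in> A}"
        by (auto simp: indicator_def)
      then show ?thesis by simp
    qed
    show ?thesis
      by (subst kap_int[OF a, where B=1]) (auto simp: e kb_alt)
  qed
  finally show ?thesis .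
qed

lemma kap_emeasure:
  assumes a: "\<alpha> > 0" and A[measurable]: "A \<in> sets borel"
  shows "emeasure (kap \<alpha> x y) A = ennreal (kendall_basic \<alpha> x y A)"
  using finite_measure.emeasure_eq_measure[OF prob_space.finite_measure[OF prob_kap[OF a]]] kap_measure[OF a A] by simp

lemma kb_bounds:
  assumes a: "\<alpha> > 0" and A[measurable]: "A \<in> sets borel"
  shows "0 \<le> kendall_basic \<alpha> x y A" "kendall_basic \<alpha> x y A \<le> 1"
proof -
  have e: "measure (kap \<alpha> x y) A = kendall_basic \<alpha> x y A" by (rule kap_measure[OF a A])
  show "0 \<le> kendall_basic \<alpha> x y A" using measure_nonneg e by metis
  show "kendall_basic \<alpha> x y A \<le> 1" using prob_space.prob_le_1[OF prob_kap[OF a], of x y A] e by simp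
qed

lemma kb_meas:
  assumes a: "\<alpha> > 0" and A[measurable]: "A \<in> sets borel"
  shows "(\<lambda>p. kendall_basic \<alpha> (fst p) (snd p) A) \<in> borel_measurable (borel \<Otimes>\<^sub>M borel)"
proof -
  interpret S: prob_space "sym_pareto \<alpha>" by (rule sp_prob[OF a])
  have [measurable]: "Mx \<in> borel_measurable borel \<Longrightarrow> True" by simp
  have Mm[measurable]: "(\<lambda>p. Mx (fst p) (snd p)) \<in> borel_measurable (borel \<Otimes>\<^sub>M borel)"
    unfolding Mx_def by measurable
  have rm[measurable]: "(\<lambda>p. rho \<alpha> (fst p) (snd p)) \<in> borel_measurable (borel \<Otimes>\<^sub>M borel)"
    unfolding rho_def Mx_def by measurable
  have nm: "(\<lambda>p. \<integral>\<^sup>+ z. indicator A (Mx (fst p) (snd p) * z) \<partial>sym_pareto \<alpha>) \<in> borel_measurable (borel \<Otimes>\<^sub>M borel)"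
    by (rule S.borel_measurable_nn_integral) measurable
  have "(\<lambda>p. measure (sym_pareto \<alpha>) {z. Mx (fst p) (snd p) * z \<in> A}) =
        (\<lambda>p. enn2real (\<integral>\<^sup>+ z. indicator A (Mx (fst p) (snd p) * z) \<partial>sym_pareto \<alpha>))"
  proof
    fix p :: "real \<times> real"
    have [measurable]: "{z. Mx (fst p) (snd p) * z \<in> A} \<in> sets borel" by measurable
    have "(\<integral>\<^sup>+ z. indicator A (Mx (fst p) (snd p) * z) \<partial>sym_pareto \<alpha>) =
          (\<integral>\<^sup>+ z. indicator {z. Mx (fst p) (snd p) * z \<in> A} z \<partial>sym_pareto \<alpha>)"
      by (rule nn_integral_cong) (simp add: indicator_def)
    also have "\<dots> = emeasure (sym_pareto \<alpha>) {z. Mx (fst p) (snd p) * z \<in> A}"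
      by simp
    finally show "measure (sym_pareto \<alpha>) {z. Mx (fst p) (snd p) * z \<in> A} =
        enn2real (\<integral>\<^sup>+ z. indicator A (Mx (fst p) (snd p) * z) \<partial>sym_pareto \<alpha>)"
      by (simp add: S.emeasure_eq_measure)
  qed
  then have mm[measurable]: "(\<lambda>p. measure (sym_pareto \<alpha>) {z. Mx (fst p) (snd p) * z \<in> A}) \<in> borel_measurable (borel \<Otimes>\<^sub>M borel)"
    using nm by simp
  show ?thesis unfolding kb_alt by measurable
qed

lemma kap_meas:
  assumes a: "\<alpha> > 0"
  shows "(\<lambda>p. kap \<alpha> (fst p) (snd p)) \<in> measurable (borel \<Otimes>\<^sub>M borel) (subprob_algebra borel)"
proof (rule measurable_subprob_algebra)
  fix p :: "real \<times> real"
  show "subprob_space (kap \<alpha> (fst p) (snd p))" by (rule prob_space_imp_subprob_space, rule prob_kap[OF a])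
  show "sets (kap \<alpha> (fst p) (snd p)) = sets borel" by simp
next
  fix A :: "real set" assume A: "A \<in> sets borel"
  have "(\<lambda>p. ennreal (kendall_basic \<alpha> (fst p) (snd p) A)) \<in> borel_measurable (borel \<Otimes>\<^sub>M borel)"
    using kb_meas[OF a A] by measurable
  then show "(\<lambda>p. emeasure (kap \<alpha> (fst p) (snd p)) A) \<in> borel_measurable (borel \<Otimes>\<^sub>M borel)"
    by (simp add: kap_emeasure[OF a A])
qed

lemma kap_meas_y:
  assumes a: "\<alpha> > 0" and s: "sets N = sets borel"
  shows "kap \<alpha> x \<in> measurable N (subprob_algebra borel)"
proof -
  have "(\<lambda>y. (x, y)) \<in> measurable N (borel \<Otimes>\<^sub>M borel)"
    using s by (simp add: measurable_cong_sets[OF s refl])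
  from measurable_compose[OF this kap_meas[OF a]] show ?thesis by simp
qed

lemma kap_meas_N:
  assumes a: "\<alpha> > 0" and s: "sets N = sets borel"
  shows "(\<lambda>p. kap \<alpha> (fst p) (snd p)) \<in> measurable (borel \<Otimes>\<^sub>M N) (subprob_algebra borel)"
proof -
  have e: "sets (borel \<Otimes>\<^sub>M N) = sets (borel \<Otimes>\<^sub>M borel)"
    using s by (intro sets_pair_measure_cong) auto
  show ?thesis
    apply (subst measurable_cong_sets[OF e refl])
    by (rule kap_meas[OF a])
qed

definition Kp :: "real \<Rightarrow> real measure \<Rightarrow> real \<Rightarrow> real measure" where
  "Kp \<alpha> N x = N \<bind> kap \<alpha> x"

locale kset =
  fixes \<alpha> :: real and N :: "real measure"
  assumes a: "\<alpha> > 0" and P: "prob_space N" and s: "sets N = sets borel"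
begin

lemma sets_Kp[simp]: "sets (Kp \<alpha> N x) = sets borel"
proof -
  have "space N \<noteq> {}" using P prob_space.not_empty by blast
  then show ?thesis unfolding Kp_def by (subst sets_bind) auto
qed

lemma space_Kp[simp]: "space (Kp \<alpha> N x) = UNIV"
  using sets_eq_imp_space_eq[OF sets_Kp] by simp

lemma prob_Kp: "prob_space (Kp \<alpha> N x)"
  unfolding Kp_def
  by (rule prob_space.prob_space_bind[OF P _ kap_meas_y[OF a s]]) (auto intro: prob_kap[OF a])

lemma Kp_int:
  fixes g :: "real \<Rightarrow> real"
  assumes g[measurable]: "g \<in> borel_measurable borel" and gb: "\<And>z. \<bar>g z\<bar> \<le> B"
  shows "integral\<^sup>L (Kp \<alpha> N x) g = (\<integral>y. integral\<^sup>L (kap \<alpha> x y) g \<partial>N)"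
  unfolding Kp_def
  by (rule integral_bind[where K=borel and B=B and B'=1])
     (auto simp: gb kap_meas_y[OF a s] prob_space.finite_measure[OF P] prob_space.emeasure_space_1[OF prob_kap[OF a]])

lemma Kp_emeasure:
  assumes A[measurable]: "A \<in> sets borel"
  shows "emeasure (Kp \<alpha> N x) A = ennreal (\<integral>y. kendall_basic \<alpha> x y A \<partial>N)"
proof -
  have m: "(\<lambda>y. kendall_basic \<alpha> x y A) \<in> borel_measurable N"
  proof -
    have "(\<lambda>y. (x, y)) \<in> measurable N (borel \<Otimes>\<^sub>M borel)"
      using s by (simp add: measurable_cong_sets[OF s refl])
    from measurable_compose[OF this kb_meas[OF a A]] show ?thesis by simp
  qed
  have b: "0 \<le> kendall_basic \<alpha> x y A \<and> kendall_basic \<alpha> x y A \<le> 1" for y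
    using kb_bounds[OF a A] by auto
  have "emeasure (Kp \<alpha> N x) A = (\<integral>\<^sup>+ y. emeasure (kap \<alpha> x y) A \<partial>N)"
    unfolding Kp_def
    by (rule emeasure_bind[OF _ kap_meas_y[OF a s]]) (use P prob_space.not_empty in auto)
  also have "\<dots> = (\<integral>\<^sup>+ y. ennreal (kendall_basic \<alpha> x y A) \<partial>N)"
    by (simp add: kap_emeasure[OF a A])
  also have "\<dots> = ennreal (\<integral>y. kendall_basic \<alpha> x y A \<partial>N)"
  proof (rule nn_integral_eq_integral)
    show "integrable N (\<lambda>y. kendall_basic \<alpha> x y A)"
      using m b by (intro finite_measure.integrable_const_bound[OF prob_space.finite_measure[OF P], where B=1]) auto
  qed (use b in auto)
  finally show ?thesis .
qed

end

context kset begin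
lemma kernel_eq: "kendall_kernel \<alpha> N x = Kp \<alpha> N x"
proof -
  have "kendall_kernel \<alpha> N x = measure_of UNIV (sets borel) (emeasure (Kp \<alpha> N x))"
    unfolding kendall_kernel_def
  proof (rule measure_of_eq)
    show "sets borel \<subseteq> Pow UNIV" by simp
    fix A :: "real set" assume "A \<in> sigma_sets UNIV (sets borel)"
    moreover have "sigma_sets UNIV (sets borel) = (sets borel :: real set set)"
      using sets.sigma_sets_eq[of borel] by (simp only: space_borel)
    ultimately have "A \<in> sets borel" by blast
    then show "ennreal (\<integral>y. kendall_basic \<alpha> x y A \<partial>N) = emeasure (Kp \<alpha> N x) A"
      by (simp add: Kp_emeasure)
  qed
  also have "\<dots> = Kp \<alpha> N x"
    using measure_of_of_measure[of "Kp \<alpha> N x"] by simp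
  finally show ?thesis .
qed

lemma Kp_meas: "Kp \<alpha> N \<in> measurable borel (subprob_algebra borel)"
proof -
  have "(\<lambda>x. N) \<in> measurable borel (subprob_algebra N)"
    using P by (intro measurable_const) (auto simp: space_subprob_algebra prob_space_imp_subprob_space)
  then show ?thesis unfolding Kp_def
    by (rule measurable_bind) (use kap_meas_N[OF a s] in simp)
qed

end

lemma key_powr:
  fixes x y c \<alpha> :: real
  assumes M: "Mx x y > 0" and c: "c > 0"
  shows "rho \<alpha> x y * (Mx x y / c) powr \<alpha> = (min \<bar>x\<bar> \<bar>y\<bar> / c) powr \<alpha>"
    and "(min \<bar>x\<bar> \<bar>y\<bar> / c) powr \<alpha> * (Mx x y / c) powr \<alpha> = (\<bar>x\<bar>/c) powr \<alpha> * (\<bar>y\<bar>/c) powr \<alpha>"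
    and "(min \<bar>x\<bar> \<bar>y\<bar> / c) powr \<alpha> + (Mx x y / c) powr \<alpha> = (\<bar>x\<bar>/c) powr \<alpha> + (\<bar>y\<bar>/c) powr \<alpha>"
proof -
  have "rho \<alpha> x y * (Mx x y / c) powr \<alpha> = (min \<bar>x\<bar> \<bar>y\<bar> / Mx x y * (Mx x y / c)) powr \<alpha>"
    unfolding rho_def by (rule powr_mult[symmetric])
  also have "min \<bar>x\<bar> \<bar>y\<bar> / Mx x y * (Mx x y / c) = min \<bar>x\<bar> \<bar>y\<bar> / c"
    using M by simp
  finally show "rho \<alpha> x y * (Mx x y / c) powr \<alpha> = (min \<bar>x\<bar> \<bar>y\<bar> / c) powr \<alpha>" .
  show "(min \<bar>x\<bar> \<bar>y\<bar> / c) powr \<alpha> * (Mx x y / c) powr \<alpha> = (\<bar>x\<bar>/c) powr \<alpha> * (\<bar>y\<bar>/c) powr \<alpha>"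
    by (cases "\<bar>x\<bar> \<le> \<bar>y\<bar>") (auto simp: Mx_def min_def max_def mult.commute)
  show "(min \<bar>x\<bar> \<bar>y\<bar> / c) powr \<alpha> + (Mx x y / c) powr \<alpha> = (\<bar>x\<bar>/c) powr \<alpha> + (\<bar>y\<bar>/c) powr \<alpha>"
    by (cases "\<bar>x\<bar> \<le> \<bar>y\<bar>") (auto simp: Mx_def min_def max_def add.commute)
qed

lemma e1_abs: "c > 0 \<Longrightarrow> \<alpha> > 0 \<Longrightarrow> \<bar>e1 \<alpha> c z\<bar> \<le> 1"
  unfolding e1_def by (auto intro!: powr_le1)

lemma kap_e0:
  assumes a: "\<alpha> > 0" and c: "c > 0"
  shows "integral\<^sup>L (kap \<alpha> x y) (e0 c) = e0 c x * e0 c y - e1 \<alpha> c x * e1 \<alpha> c y"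
proof (cases "Mx x y = 0")
  case True
  then have "x = 0" "y = 0" by (auto simp: Mx_def max_def split: if_splits)
  then show ?thesis using True a c by (subst kap_int[OF a, where B=1]) (auto simp: e0_def e1_def)
next
  case False
  then have M: "Mx x y > 0" by (simp add: Mx_def)
  let ?M = "Mx x y" and ?r = "rho \<alpha> x y"
  have I: "integral\<^sup>L (kap \<alpha> x y) (e0 c) = ?r * integral\<^sup>L (sym_pareto \<alpha>) (\<lambda>z. e0 c (?M * z)) + (1 - ?r) * ((e0 c ?M + e0 c (- ?M)) / 2)"
    using False by (subst kap_int[OF a, where B=1]) (auto simp: e0_def)
  show ?thesis
  proof (cases "?M \<le> c")
    case True
    then have xy: "\<bar>x\<bar> \<le> c" "\<bar>y\<bar> \<le> c" by (auto simp: Mx_def)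
    have q: "(?M/c) powr (2*\<alpha>) = (?M/c) powr \<alpha> * (?M/c) powr \<alpha>" by (metis mult_2 powr_add)
    have "?r * (?M/c) powr (2*\<alpha>) = (\<bar>x\<bar>/c) powr \<alpha> * (\<bar>y\<bar>/c) powr \<alpha>"
      unfolding q mult.assoc[symmetric] key_powr(1)[OF M c] key_powr(2)[OF M c] ..
    moreover have "e0 c ?M = 1" using True M by (simp add: e0_def)
    ultimately show ?thesis unfolding I pi_e0[OF a M c] using True xy
      by (simp add: e0_def e1_def algebra_simps)
  next
    case False
    then have "\<bar>x\<bar> > c \<or> \<bar>y\<bar> > c" by (auto simp: Mx_def)
    then show ?thesis unfolding I pi_e0[OF a M c] using False M
      by (auto simp: e0_def e1_def)
  qed
qed

lemma kap_e1:
  assumes a: "\<alpha> > 0" and c: "c > 0"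
  shows "integral\<^sup>L (kap \<alpha> x y) (e1 \<alpha> c) = e1 \<alpha> c x * e0 c y + e0 c x * e1 \<alpha> c y - 2 * e1 \<alpha> c x * e1 \<alpha> c y"
proof (cases "Mx x y = 0")
  case True
  then have "x = 0" "y = 0" by (auto simp: Mx_def max_def split: if_splits)
  then show ?thesis using True a c
    by (subst kap_int[OF a, where B=1]) (simp_all add: e1_abs[OF c a], simp add: e0_def e1_def)
next
  case False
  then have M: "Mx x y > 0" by (simp add: Mx_def)
  let ?M = "Mx x y" and ?r = "rho \<alpha> x y"
  have I: "integral\<^sup>L (kap \<alpha> x y) (e1 \<alpha> c) = ?r * integral\<^sup>L (sym_pareto \<alpha>) (\<lambda>z. e1 \<alpha> c (?M * z)) + (1 - ?r) * ((e1 \<alpha> c ?M + e1 \<alpha> c (- ?M)) / 2)"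
    using False by (subst kap_int[OF a, where B=1]) (auto simp: e1_abs[OF c a])
  show ?thesis
  proof (cases "?M \<le> c")
    case True
    then have xy: "\<bar>x\<bar> \<le> c" "\<bar>y\<bar> \<le> c" by (auto simp: Mx_def)
    have q: "(?M/c) powr (2*\<alpha>) = (?M/c) powr \<alpha> * (?M/c) powr \<alpha>" by (metis mult_2 powr_add)
    have 1: "?r * (?M/c) powr (2*\<alpha>) = (\<bar>x\<bar>/c) powr \<alpha> * (\<bar>y\<bar>/c) powr \<alpha>"
      unfolding q mult.assoc[symmetric] key_powr(1)[OF M c] key_powr(2)[OF M c] ..
    have 2: "?r * (?M/c) powr \<alpha> + (?M/c) powr \<alpha> = (\<bar>x\<bar>/c) powr \<alpha> + (\<bar>y\<bar>/c) powr \<alpha>"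
      unfolding key_powr(1)[OF M c] key_powr(3)[OF M c] ..
    have e: "e1 \<alpha> c ?M = (?M/c) powr \<alpha>" using True M by (simp add: e1_def)
    have "integral\<^sup>L (kap \<alpha> x y) (e1 \<alpha> c) = (?r * (?M/c) powr \<alpha> + (?M/c) powr \<alpha>) - 2 * (?r * (?M/c) powr (2*\<alpha>))"
      unfolding I pi_e1[OF a M c] using True e by (simp add: algebra_simps)
    also have "\<dots> = e1 \<alpha> c x * e0 c y + e0 c x * e1 \<alpha> c y - 2 * e1 \<alpha> c x * e1 \<alpha> c y"
      unfolding 1 2 using xy by (simp add: e0_def e1_def)
    finally show ?thesis .
  next
    case False
    then have "\<bar>x\<bar> > c \<or> \<bar>y\<bar> > c" by (auto simp: Mx_def)
    moreover have "e1 \<alpha> c ?M = 0" using False M by (simp add: e1_def)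
    ultimately show ?thesis unfolding I pi_e1[OF a M c] using False M
      by (auto simp: e0_def e1_def)
  qed
qed

lemma kap_sym:
  fixes g :: "real \<Rightarrow> real"
  assumes a: "\<alpha> > 0" and g[measurable]: "g \<in> borel_measurable borel" and gb: "\<And>z. \<bar>g z\<bar> \<le> B"
  shows "integral\<^sup>L (kap \<alpha> x y) (\<lambda>z. g (- z)) = integral\<^sup>L (kap \<alpha> x y) g"
proof -
  have s: "integral\<^sup>L (sym_pareto \<alpha>) (\<lambda>z. g (- (Mx x y * z))) = integral\<^sup>L (sym_pareto \<alpha>) (\<lambda>z. g (Mx x y * z))"
    using sp_int_sym[OF a, of "\<lambda>z. g (Mx x y * z)"] by simp
  show ?thesis
    by (subst kap_int[OF a, where B=B], simp, simp add: gb)+ (simp add: s add.commute)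
qed

context kset begin

definition NN :: "real \<Rightarrow> real" where "NN c = integral\<^sup>L N (e0 c)"
definition JJ :: "real \<Rightarrow> real" where "JJ c = integral\<^sup>L N (e1 \<alpha> c)"

lemma measN: "f \<in> borel_measurable borel \<Longrightarrow> f \<in> borel_measurable N"
  by (simp add: measurable_cong_sets[OF s refl])

lemma intN: "f \<in> borel_measurable borel \<Longrightarrow> (\<And>z. \<bar>f z\<bar> \<le> (B::real)) \<Longrightarrow> integrable N f"
  by (rule finite_measure.integrable_const_bound[OF prob_space.finite_measure[OF P], where B=B])
     (auto intro: measN)

lemma int_e0: "integrable N (e0 c)"
  by (rule intN[where B=1]) (auto simp: e0_def)
lemma int_e1: "c > 0 \<Longrightarrow> integrable N (e1 \<alpha> c)"
  by (rule intN[where B=1]) (auto simp: e1_abs a)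

lemma Kp_e0:
  assumes c: "c > 0"
  shows "integral\<^sup>L (Kp \<alpha> N x) (e0 c) = e0 c x * NN c - e1 \<alpha> c x * JJ c"
proof -
  have "integral\<^sup>L (Kp \<alpha> N x) (e0 c) = (\<integral>y. e0 c x * e0 c y - e1 \<alpha> c x * e1 \<alpha> c y \<partial>N)"
    by (subst Kp_int[where B=1]) (auto simp: kap_e0[OF a c] e0_def)
  also have "\<dots> = (\<integral>y. e0 c x * e0 c y \<partial>N) - (\<integral>y. e1 \<alpha> c x * e1 \<alpha> c y \<partial>N)"
    by (rule Bochner_Integration.integral_diff) (auto intro: int_e0 int_e1[OF c])
  also have "\<dots> = e0 c x * NN c - e1 \<alpha> c x * JJ c"
    by (simp add: NN_def JJ_def)
  finally show ?thesis .
qed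

lemma Kp_e1:
  assumes c: "c > 0"
  shows "integral\<^sup>L (Kp \<alpha> N x) (e1 \<alpha> c) = e1 \<alpha> c x * NN c + e0 c x * JJ c - 2 * e1 \<alpha> c x * JJ c"
proof -
  have "integral\<^sup>L (Kp \<alpha> N x) (e1 \<alpha> c) = (\<integral>y. (e1 \<alpha> c x * e0 c y + e0 c x * e1 \<alpha> c y) - (2 * e1 \<alpha> c x) * e1 \<alpha> c y \<partial>N)"
    by (subst Kp_int[where B=1]) (auto simp: kap_e1[OF a c] e1_abs[OF c a] mult.assoc)
  also have "\<dots> = ((\<integral>y. e1 \<alpha> c x * e0 c y \<partial>N) + (\<integral>y. e0 c x * e1 \<alpha> c y \<partial>N)) - (\<integral>y. (2 * e1 \<alpha> c x) * e1 \<alpha> c y \<partial>N)"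
    by (subst Bochner_Integration.integral_diff, (auto intro!: Bochner_Integration.integrable_add intro: int_e0 int_e1[OF c])[2],
        subst Bochner_Integration.integral_add) (auto intro: int_e0 int_e1[OF c])
  also have "\<dots> = e1 \<alpha> c x * NN c + e0 c x * JJ c - 2 * e1 \<alpha> c x * JJ c"
    by (simp add: NN_def JJ_def)
  finally show ?thesis .
qed

lemma Kp_sym:
  fixes g :: "real \<Rightarrow> real"
  assumes g[measurable]: "g \<in> borel_measurable borel" and gb: "\<And>z. \<bar>g z\<bar> \<le> B"
  shows "integral\<^sup>L (Kp \<alpha> N x) (\<lambda>z. g (- z)) = integral\<^sup>L (Kp \<alpha> N x) g"
  by (subst Kp_int[where B=B], simp, simp add: gb)+ (simp add: kap_sym[OF a g gb])

end

definition Rr :: "real \<Rightarrow> real \<Rightarrow> real measure" where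
  "Rr a z = (if z \<le> a then return borel z else null_measure borel)"

lemma Rr_meas: "Rr a \<in> measurable borel (subprob_algebra borel)"
  unfolding Rr_def
  by (rule measurable_If[OF return_measurable measurable_const]) auto

lemma Rr_sub: "subprob_space (Rr a z)"
  by (simp add: Rr_def subprob_space_return subprob_space_null_measure)

lemma Rr_int: "g \<in> borel_measurable borel \<Longrightarrow> integral\<^sup>L (Rr a z) g = (if z \<le> a then g z else (0::real))"
  by (simp add: Rr_def integral_return)

lemma Rr_emeasure: "A \<in> sets borel \<Longrightarrow> emeasure (Rr a z) A = indicator (A \<inter> {..a}) z"
  by (simp add: Rr_def indicator_def)

context kset begin

definition Lx :: "real \<Rightarrow> real \<Rightarrow> real measure" where
  "Lx a x = Kp \<alpha> N x \<bind> Rr a"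

lemma Rr_meas_Kp: "Rr a \<in> measurable (Kp \<alpha> N x) (subprob_algebra borel)"
  using Rr_meas[of a] by (subst measurable_cong_sets[OF sets_Kp refl])

lemma Lx_meas: "Lx a \<in> measurable borel (subprob_algebra borel)"
  unfolding Lx_def by (rule measurable_bind2[OF Kp_meas Rr_meas])

lemma Lx_meas': "sets M = sets borel \<Longrightarrow> Lx a \<in> measurable M (subprob_algebra borel)"
  using Lx_meas by (subst measurable_cong_sets[of M borel]) auto

lemma Lx_sub: "subprob_space (Lx a x)"
  using measurable_space[OF Lx_meas, of x] by (simp add: space_subprob_algebra)

lemma Lx_emeasure:
  assumes A: "A \<in> sets borel"
  shows "emeasure (Lx a x) A = emeasure (Kp \<alpha> N x) (A \<inter> {..a})"
proof -
  have "emeasure (Lx a x) A = (\<integral>\<^sup>+ z. emeasure (Rr a z) A \<partial>Kp \<alpha> N x)"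
    unfolding Lx_def by (rule emeasure_bind[OF _ Rr_meas_Kp A]) simp
  also have "\<dots> = (\<integral>\<^sup>+ z. indicator (A \<inter> {..a}) z \<partial>Kp \<alpha> N x)"
    by (simp add: Rr_emeasure[OF A])
  also have "\<dots> = emeasure (Kp \<alpha> N x) (A \<inter> {..a})"
    using A by simp
  finally show ?thesis .
qed

lemma Lx_int:
  fixes g :: "real \<Rightarrow> real"
  assumes g[measurable]: "g \<in> borel_measurable borel" and gb: "\<And>z. \<bar>g z\<bar> \<le> B"
  shows "integral\<^sup>L (Lx a x) g = (\<integral>z. (if z \<le> a then g z else 0) \<partial>Kp \<alpha> N x)"
  unfolding Lx_def
  by (subst integral_bind[where K=borel and B=B and B'=1])
     (auto simp: gb Rr_meas_Kp prob_space.finite_measure[OF prob_Kp] Rr_int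
           intro!: AE_I2 subprob_space.subprob_emeasure_le_1 Rr_sub)

lemma B_step:
  assumes sB: "sets (below_meas \<alpha> N a k) = sets borel" and pB: "subprob_space (below_meas \<alpha> N a k)"
  shows "below_meas \<alpha> N a (Suc k) = below_meas \<alpha> N a k \<bind> Lx a"
proof -
  let ?B = "below_meas \<alpha> N a k"
  have ne: "space ?B \<noteq> {}" using pB subprob_space.subprob_not_empty by blast
  have sb: "sets (?B \<bind> Lx a) = sets borel"
    by (rule sets_bind[OF _ ne]) (metis Lx_meas' sB subprob_measurableD(2))
  have spb: "space (?B \<bind> Lx a) = UNIV"
    using sets_eq_imp_space_eq[OF sb] by simp
  have "below_meas \<alpha> N a (Suc k) = measure_of UNIV (sets borel) (emeasure (?B \<bind> Lx a))"
    unfolding below_meas.simps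
  proof (rule measure_of_eq)
    show "sets borel \<subseteq> Pow UNIV" by simp
    fix A :: "real set" assume "A \<in> sigma_sets UNIV (sets borel)"
    moreover have "sigma_sets UNIV (sets borel) = (sets borel :: real set set)"
      using sets.sigma_sets_eq[of borel] by (simp only: space_borel)
    ultimately have A: "A \<in> sets borel" by blast
    have "emeasure (?B \<bind> Lx a) A = (\<integral>\<^sup>+ x. emeasure (Lx a x) A \<partial>?B)"
      by (rule emeasure_bind[OF ne Lx_meas'[OF sB] A])
    also have "\<dots> = (\<integral>\<^sup>+ x. emeasure (kendall_kernel \<alpha> N x) (A \<inter> {..a}) \<partial>?B)"
      by (simp add: Lx_emeasure[OF A] kernel_eq)
    finally show "(\<integral>\<^sup>+ x. emeasure (kendall_kernel \<alpha> N x) (A \<inter> {..a}) \<partial>?B) = emeasure (?B \<bind> Lx a) A" by simp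
  qed
  also have "\<dots> = ?B \<bind> Lx a"
    using measure_of_of_measure[of "?B \<bind> Lx a"] sb spb by simp
  finally show ?thesis .
qed

lemma B_props: "sets (below_meas \<alpha> N a k) = sets borel \<and> subprob_space (below_meas \<alpha> N a k)"
proof (induction k)
  case 0
  then show ?case by (auto simp: subprob_space_return)
next
  case (Suc k)
  then have e: "below_meas \<alpha> N a (Suc k) = below_meas \<alpha> N a k \<bind> Lx a" by (intro B_step) auto
  have ne: "space (below_meas \<alpha> N a k) \<noteq> {}" using Suc subprob_space.subprob_not_empty by blast
  show ?case unfolding e
    using Suc by (auto intro!: sets_bind[OF _ ne] subprob_space_bind Lx_meas'
        dest: subprob_measurableD(2)[OF Lx_meas'])
qed

lemma B_int:
  fixes g :: "real \<Rightarrow> real"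
  assumes g[measurable]: "g \<in> borel_measurable borel" and gb: "\<And>z. \<bar>g z\<bar> \<le> B"
  shows "integral\<^sup>L (below_meas \<alpha> N a (Suc k)) g =
    (\<integral>x. (\<integral>z. (if z \<le> a then g z else 0) \<partial>Kp \<alpha> N x) \<partial>below_meas \<alpha> N a k)"
proof -
  have sB: "sets (below_meas \<alpha> N a k) = sets borel" and pB: "subprob_space (below_meas \<alpha> N a k)"
    using B_props by auto
  have "integral\<^sup>L (below_meas \<alpha> N a (Suc k)) g = (\<integral>x. integral\<^sup>L (Lx a x) g \<partial>below_meas \<alpha> N a k)"
    unfolding B_step[OF sB pB]
    by (rule integral_bind[where K=borel and B=B and B'=1])
       (auto simp: gb Lx_meas'[OF sB] subprob_space.axioms(1)[OF pB]
             intro!: AE_I2 subprob_space.subprob_emeasure_le_1 Lx_sub)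
  also have "\<dots> = (\<integral>x. (\<integral>z. (if z \<le> a then g z else 0) \<partial>Kp \<alpha> N x) \<partial>below_meas \<alpha> N a k)"
    by (simp add: Lx_int[OF g gb])
  finally show ?thesis .
qed

end

context kset begin

lemma intK: "f \<in> borel_measurable borel \<Longrightarrow> (\<And>z. \<bar>f z\<bar> \<le> (B::real)) \<Longrightarrow> integrable (Kp \<alpha> N x) f"
  by (rule finite_measure.integrable_const_bound[OF prob_space.finite_measure[OF prob_Kp], where B=B])
     (auto simp: measurable_cong_sets[OF sets_Kp refl])

lemma intB: "f \<in> borel_measurable borel \<Longrightarrow> (\<And>z. \<bar>f z\<bar> \<le> (B::real)) \<Longrightarrow> integrable (below_meas \<alpha> N a k) f"
proof -
  assume f: "f \<in> borel_measurable borel" and b: "\<And>z. \<bar>f z\<bar> \<le> (B::real)"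
  have sB: "sets (below_meas \<alpha> N a k) = sets borel" and pB: "subprob_space (below_meas \<alpha> N a k)"
    using B_props by auto
  have "f \<in> borel_measurable (below_meas \<alpha> N a k)" using f by (simp add: measurable_cong_sets[OF sB refl])
  then show ?thesis
    by (intro finite_measure.integrable_const_bound[where B=B] subprob_space.axioms(1)[OF pB]) (auto simp: b)
qed

lemma sym_trick:
  fixes h :: "real \<Rightarrow> real"
  assumes h[measurable]: "h \<in> borel_measurable borel" and hb: "\<And>z. \<bar>h z\<bar> \<le> B"
    and f[measurable]: "f \<in> borel_measurable borel" and fb: "\<And>z. \<bar>f z\<bar> \<le> B'"
    and pw: "\<And>z. h z + h (- z) = f z"
  shows "integral\<^sup>L (Kp \<alpha> N x) h = integral\<^sup>L (Kp \<alpha> N x) f / 2"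
proof -
  have "integral\<^sup>L (Kp \<alpha> N x) f = (\<integral>z. h z + h (- z) \<partial>Kp \<alpha> N x)"
    by (simp add: pw)
  also have "\<dots> = integral\<^sup>L (Kp \<alpha> N x) h + (\<integral>z. h (- z) \<partial>Kp \<alpha> N x)"
    by (rule Bochner_Integration.integral_add) (auto intro!: intK[where B=B] simp: hb)
  also have "(\<integral>z. h (- z) \<partial>Kp \<alpha> N x) = integral\<^sup>L (Kp \<alpha> N x) h"
    by (rule Kp_sym[OF h hb])
  finally show ?thesis by simp
qed

lemma restr_e0:
  assumes a0: "0 < a" and ac: "a \<le> c"
  shows "(\<integral>z. (if z \<le> a then e0 c z else 0) \<partial>Kp \<alpha> N x) = (e0 c x * NN c - e1 \<alpha> c x * JJ c + (e0 a x * NN a - e1 \<alpha> a x * JJ a)) / 2"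
proof -
  have pw: "(if z \<le> a then e0 c z else 0) + (if - z \<le> a then e0 c (- z) else 0) = e0 c z + e0 a z" for z
    using a0 ac by (cases "z \<le> a"; cases "- z \<le> a") (auto simp: e0_def)
  have "(\<integral>z. (if z \<le> a then e0 c z else 0) \<partial>Kp \<alpha> N x) = (\<integral>z. e0 c z + e0 a z \<partial>Kp \<alpha> N x) / 2"
    by (rule sym_trick[where B=1 and B'=2]) (use pw in \<open>auto simp: e0_def\<close>)
  also have "(\<integral>z. e0 c z + e0 a z \<partial>Kp \<alpha> N x) = integral\<^sup>L (Kp \<alpha> N x) (e0 c) + integral\<^sup>L (Kp \<alpha> N x) (e0 a)"
    by (rule Bochner_Integration.integral_add) (auto intro!: intK[where B=1] simp: e0_def)
  finally show ?thesis using a0 ac unfolding Kp_e0[OF a0] Kp_e0[OF order.strict_trans2[OF a0 ac]] by simp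
qed

lemma restr_e1:
  assumes a0: "0 < a" and ac: "a \<le> c"
  shows "(\<integral>z. (if z \<le> a then e1 \<alpha> c z else 0) \<partial>Kp \<alpha> N x) =
    ((e1 \<alpha> c x * NN c + e0 c x * JJ c - 2 * e1 \<alpha> c x * JJ c) + (a/c) powr \<alpha> * (e1 \<alpha> a x * NN a + e0 a x * JJ a - 2 * e1 \<alpha> a x * JJ a)) / 2"
proof -
  have c0: "c > 0" using a0 ac by simp
  have pw: "(if z \<le> a then e1 \<alpha> c z else 0) + (if - z \<le> a then e1 \<alpha> c (- z) else 0) = e1 \<alpha> c z + (a/c) powr \<alpha> * e1 \<alpha> a z" for z
  proof (cases "\<bar>z\<bar> \<le> a")
    case True
    have "(a/c) powr \<alpha> * (\<bar>z\<bar>/a) powr \<alpha> = ((a/c) * (\<bar>z\<bar>/a)) powr \<alpha>"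
      by (rule powr_mult[symmetric])
    also have "(a/c) * (\<bar>z\<bar>/a) = \<bar>z\<bar>/c" using a0 by simp
    finally have "(a/c) powr \<alpha> * (\<bar>z\<bar>/a) powr \<alpha> = (\<bar>z\<bar>/c) powr \<alpha>" .
    then show ?thesis using True ac by (auto simp: e1_def)
  next
    case False
    then show ?thesis using a0 by (auto simp: e1_def)
  qed
  have w: "\<bar>(a/c) powr \<alpha>\<bar> \<le> 1" using a0 ac c0 less_imp_le[OF a] by (auto intro!: powr_le1)
  have "(\<integral>z. (if z \<le> a then e1 \<alpha> c z else 0) \<partial>Kp \<alpha> N x) = (\<integral>z. e1 \<alpha> c z + (a/c) powr \<alpha> * e1 \<alpha> a z \<partial>Kp \<alpha> N x) / 2"
  proof (rule sym_trick[where B=1 and B'=2])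
    show "\<bar>e1 \<alpha> c z + (a / c) powr \<alpha> * e1 \<alpha> a z\<bar> \<le> 2" for z
    proof -
      have "\<bar>(a / c) powr \<alpha> * e1 \<alpha> a z\<bar> \<le> 1"
        using w e1_abs[OF a0 a, of z] by (simp add: abs_mult mult_le_one)
      then show ?thesis using e1_abs[OF c0 a, of z] by linarith
    qed
  qed (use pw e1_abs[OF c0 a] in auto)
  also have "(\<integral>z. e1 \<alpha> c z + (a/c) powr \<alpha> * e1 \<alpha> a z \<partial>Kp \<alpha> N x) = integral\<^sup>L (Kp \<alpha> N x) (e1 \<alpha> c) + (a/c) powr \<alpha> * integral\<^sup>L (Kp \<alpha> N x) (e1 \<alpha> a)"
    by (subst Bochner_Integration.integral_add) (auto intro!: intK[where B=1] simp: e1_abs[OF c0 a] e1_abs[OF a0 a])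
  finally show ?thesis unfolding Kp_e1[OF c0] Kp_e1[OF a0] .
qed

end

lemma lin4:
  fixes f1 f2 f3 f4 :: "'a \<Rightarrow> real"
  assumes "integrable M f1" "integrable M f2" "integrable M f3" "integrable M f4"
  shows "(\<integral>x. f1 x * c1 + f2 x * c2 + f3 x * c3 + f4 x * c4 \<partial>M) =
    integral\<^sup>L M f1 * c1 + integral\<^sup>L M f2 * c2 + integral\<^sup>L M f3 * c3 + integral\<^sup>L M f4 * c4"
  using assms by (simp add: Bochner_Integration.integral_add)

context kset begin

abbreviation "Bm a k \<equiv> below_meas \<alpha> N a k"

lemma int_e0B: "integrable (Bm a k) (e0 c)"
  by (rule intB[where B=1]) (auto simp: e0_def)
lemma int_e1B: "c > 0 \<Longrightarrow> integrable (Bm a k) (e1 \<alpha> c)"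
  by (rule intB[where B=1]) (auto simp: e1_abs a)

lemma rec_e0:
  assumes a0: "0 < a" and ac: "a \<le> c"
  shows "integral\<^sup>L (Bm a (Suc k)) (e0 c) =
    integral\<^sup>L (Bm a k) (e0 c) * (NN c / 2) + integral\<^sup>L (Bm a k) (e1 \<alpha> c) * (- JJ c / 2) +
    integral\<^sup>L (Bm a k) (e0 a) * (NN a / 2) + integral\<^sup>L (Bm a k) (e1 \<alpha> a) * (- JJ a / 2)" (is "_ = ?R")
proof -
  have c0: "c > 0" using a0 ac by simp
  have "integral\<^sup>L (Bm a (Suc k)) (e0 c) = (\<integral>x. (\<integral>z. (if z \<le> a then e0 c z else 0) \<partial>Kp \<alpha> N x) \<partial>Bm a k)"
    by (rule B_int[where B=1]) (auto simp: e0_def)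
  also have "\<dots> = (\<integral>x. e0 c x * (NN c / 2) + e1 \<alpha> c x * (- JJ c / 2) + e0 a x * (NN a / 2) + e1 \<alpha> a x * (- JJ a / 2) \<partial>Bm a k)"
    by (rule Bochner_Integration.integral_cong) (auto simp: restr_e0[OF a0 ac] field_simps)
  also have "\<dots> = ?R"
    by (rule lin4) (auto intro: int_e0B int_e1B c0 a0)
  finally show ?thesis .
qed

lemma alg_e1: "((X1*N1 + Y1*J1 - 2*X1*J1) + w*(X2*N2 + Y2*J2 - 2*X2*J2)) / 2 =
   X1 * ((N1 - 2*J1)/2) + Y1 * (J1/2) + X2 * (w*(N2 - 2*J2)/2) + Y2 * (w*J2/2)" for X1 N1 Y1 J1 w X2 N2 Y2 J2 :: real
  by (simp add: field_simps)

lemma rec_e1: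
  assumes a0: "0 < a" and ac: "a \<le> c"
  shows "integral\<^sup>L (Bm a (Suc k)) (e1 \<alpha> c) =
    integral\<^sup>L (Bm a k) (e1 \<alpha> c) * ((NN c - 2 * JJ c) / 2) + integral\<^sup>L (Bm a k) (e0 c) * (JJ c / 2) +
    integral\<^sup>L (Bm a k) (e1 \<alpha> a) * ((a/c) powr \<alpha> * (NN a - 2 * JJ a) / 2) + integral\<^sup>L (Bm a k) (e0 a) * ((a/c) powr \<alpha> * JJ a / 2)" (is "_ = ?R")
proof -
  have c0: "c > 0" using a0 ac by simp
  have "integral\<^sup>L (Bm a (Suc k)) (e1 \<alpha> c) = (\<integral>x. (\<integral>z. (if z \<le> a then e1 \<alpha> c z else 0) \<partial>Kp \<alpha> N x) \<partial>Bm a k)"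
    by (rule B_int[where B=1]) (auto simp: e1_abs[OF c0 a])
  also have "\<dots> = (\<integral>x. e1 \<alpha> c x * ((NN c - 2 * JJ c) / 2) + e0 c x * (JJ c / 2) +
       e1 \<alpha> a x * ((a/c) powr \<alpha> * (NN a - 2 * JJ a) / 2) + e0 a x * ((a/c) powr \<alpha> * JJ a / 2) \<partial>Bm a k)"
    by (rule Bochner_Integration.integral_cong) (simp_all only: restr_e1[OF a0 ac] alg_e1)
  also have "\<dots> = ?R"
    by (rule lin4) (auto intro: int_e0B int_e1B c0 a0)
  finally show ?thesis .
qed

lemma phi_int:
  assumes a0: "0 < a" and at: "a < t" and n: "n \<ge> 1"
  shows "Phi \<alpha> N a n t =
    integral\<^sup>L (Bm a (n-1)) (e0 t) * (NN t / 2) + integral\<^sup>L (Bm a (n-1)) (e1 \<alpha> t) * (- JJ t / 2) +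
    integral\<^sup>L (Bm a (n-1)) (e0 a) * (- NN a / 2) + integral\<^sup>L (Bm a (n-1)) (e1 \<alpha> a) * (JJ a / 2)" (is "_ = ?R")
proof -
  have t0: "t > 0" using a0 at by simp
  have m: "measure (kendall_kernel \<alpha> N x) {a<..t} =
      e0 t x * (NN t / 2) + e1 \<alpha> t x * (- JJ t / 2) + e0 a x * (- NN a / 2) + e1 \<alpha> a x * (JJ a / 2)" for x
  proof -
    have "measure (kendall_kernel \<alpha> N x) {a<..t} = integral\<^sup>L (Kp \<alpha> N x) (indicator {a<..t})"
      by (simp add: kernel_eq)
    also have "\<dots> = (\<integral>z. e0 t z - e0 a z \<partial>Kp \<alpha> N x) / 2"
      by (rule sym_trick[where B=1 and B'=1]) (use a0 at in \<open>auto simp: e0_def indicator_def\<close>)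
    also have "(\<integral>z. e0 t z - e0 a z \<partial>Kp \<alpha> N x) = integral\<^sup>L (Kp \<alpha> N x) (e0 t) - integral\<^sup>L (Kp \<alpha> N x) (e0 a)"
      by (rule Bochner_Integration.integral_diff) (auto intro!: intK[where B=1] simp: e0_def)
    finally show ?thesis unfolding Kp_e0[OF t0] Kp_e0[OF a0] by (simp add: field_simps)
  qed
  have "Phi \<alpha> N a n t = (\<integral>x. e0 t x * (NN t / 2) + e1 \<alpha> t x * (- JJ t / 2) + e0 a x * (- NN a / 2) + e1 \<alpha> a x * (JJ a / 2) \<partial>Bm a (n-1))"
    unfolding Phi_def m ..
  also have "\<dots> = ?R"
    by (rule lin4) (auto intro: int_e0B int_e1B t0 a0)
  finally show ?thesis .
qed

end

lemma Psi_eq: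
  assumes a: "\<alpha> > 0" and c: "c > 0"
  shows "Psi \<alpha> (x/c) = e0 c x - e1 \<alpha> c x"
proof (cases "\<bar>x\<bar> \<le> c")
  case True
  have "(\<bar>x\<bar>/c) powr \<alpha> \<le> 1" using True c a by (auto intro!: powr_le1)
  then show ?thesis using True c by (simp add: Psi_def e0_def e1_def)
next
  case False
  then have "\<bar>x\<bar>/c > 1" using c by simp
  then have "(\<bar>x\<bar>/c) powr \<alpha> > 1" using a by (rule gr_one_powr)
  then show ?thesis using False c by (simp add: Psi_def e0_def e1_def)
qed

lemma Psi_meas[measurable]: "(\<lambda>x. Psi \<alpha> (x / c)) \<in> borel_measurable borel"
  unfolding Psi_def by measurable

lemma Psi_bounds: "0 \<le> Psi \<alpha> s" "\<alpha> \<ge> 0 \<Longrightarrow> Psi \<alpha> s \<le> 1"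
  by (auto simp: Psi_def)

context kset begin

lemma Gd_eq: "c > 0 \<Longrightarrow> Gd \<alpha> N c = NN c - JJ c"
  unfolding Gd_def NN_def JJ_def
  by (simp add: Psi_eq[OF a] Bochner_Integration.integral_diff[OF int_e0 int_e1])

lemma NN_F:
  assumes c: "c > 0" and sym: "\<forall>A\<in>sets borel. measure N (uminus ` A) = measure N A"
  shows "NN c = 2 * Fd N c - 1"
proof -
  interpret prob_space N by (rule P)
  have [simp]: "space N = UNIV" using sets_eq_imp_space_eq[OF s] by simp
  have [measurable]: "{-c..c} \<in> sets N" "{..c} \<in> sets N" "{..<-c} \<in> sets N" "{c<..} \<in> sets N"
    using s by auto
  have "NN c = measure N {-c..c}"
  proof -
    have "e0 c = indicator {-c..c}" by (auto simp: e0_def indicator_def fun_eq_iff)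
    then show ?thesis unfolding NN_def by simp
  qed
  also have "{-c..c} = {..c} - {..<-c}" by auto
  also have "measure N ({..c} - {..<-c}) = measure N {..c} - measure N {..<-c}"
    by (rule finite_measure_Diff) (use c in auto)
  also have "measure N {..<-c} = measure N {c<..}"
  proof -
    have "uminus ` {c<..} = {..<-c}"
      by (auto simp: image_iff intro!: exI[where x="- _"])
    moreover have "{c<..} \<in> sets borel" by simp
    ultimately show ?thesis using sym by metis
  qed
  also have "measure N {c<..} = 1 - measure N {..c}"
  proof -
    have "{c<..} = space N - {..c}" by auto
    then show ?thesis using prob_compl[of "{..c}"] by simp
  qed
  finally show ?thesis unfolding Fd_def by simp
qed

lemma Hd_eq:
  assumes c: "c > 0" and sym: "\<forall>A\<in>sets borel. measure N (uminus ` A) = measure N A"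
  shows "Hd \<alpha> N c = JJ c"
  unfolding Hd_def using NN_F[OF c sym] Gd_eq[OF c] by simp

lemma Gd_mono:
  assumes a0: "0 < a" and at: "a \<le> t"
  shows "0 \<le> Gd \<alpha> N a" "Gd \<alpha> N a \<le> Gd \<alpha> N t"
proof -
  have int: "integrable N (\<lambda>x. Psi \<alpha> (x / c))" for c
    by (rule intN[where B=1]) (use Psi_bounds a in auto)
  show "0 \<le> Gd \<alpha> N a" unfolding Gd_def by (rule integral_nonneg_AE) (simp add: Psi_bounds)
  show "Gd \<alpha> N a \<le> Gd \<alpha> N t" unfolding Gd_def
  proof (rule integral_mono[OF int int])
    fix x
    have "\<bar>x / t\<bar> \<le> \<bar>x / a\<bar>" using a0 at by (simp add: abs_div frac_le)
    then have "\<bar>x / t\<bar> powr \<alpha> \<le> \<bar>x / a\<bar> powr \<alpha>" using a by (intro powr_mono2) auto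
    then show "Psi \<alpha> (x / a) \<le> Psi \<alpha> (x / t)" by (simp add: Psi_def)
  qed
qed

end

lemma Qstep: "real (Suc k) * (x::real)^(Suc k - 1) = x^k + x * (real k * x^(k-1))"
  by (cases k) (auto simp: algebra_simps)

lemma closed:
  fixes p q Ha Ht w gm bt gm' bt' :: real and A0 A1 T0 T1 :: "nat \<Rightarrow> real"
  assumes g1: "gm * (2*p - 2*q) = (1 - w)*Ha*p"
    and g2: "bt * (2*p - 2*q) = p + (1 - w)*Ha - 2*gm"
    and g3: "gm' * (2*p - 2*q) = Ht*gm + Ha*p"
    and g4: "bt' * (2*p - 2*q) = Ht*bt + p + Ha - 2*gm'"
    and i: "A0 0 = 1" "A1 0 = 0" "T0 0 = 1" "T1 0 = 0"
    and rA0: "\<And>k. A0 (Suc k) = (p + Ha) * A0 k - Ha * A1 k"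
    and rA1: "\<And>k. A1 (Suc k) = (p - Ha) * A1 k + Ha * A0 k"
    and rT0: "\<And>k. T0 (Suc k) = ((2*q + Ht) * T0 k - Ht * T1 k + ((p + Ha) * A0 k - Ha * A1 k)) / 2"
    and rT1: "\<And>k. T1 (Suc k) = ((2*q - Ht) * T1 k + Ht * T0 k + w * ((p - Ha) * A1 k + Ha * A0 k)) / 2"
  shows "A0 k = p^k + real k*Ha*p^(k-1) \<and> A1 k = real k*Ha*p^(k-1) \<and>
         T0 k - T1 k = (1 - bt)*q^k + bt*p^k + gm*(real k*p^(k-1)) \<and>
         T0 k = (1 - bt')*q^k + (Ht*(1-bt)/2)*(real k*q^(k-1)) + bt'*p^k + gm'*(real k*p^(k-1))"
proof (induction k)
  case 0
  then show ?case using i by simp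
next
  case (Suc k)
  define P where "P = p^k"
  define Qp where "Qp = real k * p^(k-1)"
  define R where "R = q^k"
  define Qq where "Qq = real k * q^(k-1)"
  have IH: "A0 k = P + Ha*Qp" "A1 k = Ha*Qp" "T0 k - T1 k = (1 - bt)*R + bt*P + gm*Qp"
     "T0 k = (1 - bt')*R + (Ht*(1-bt)/2)*Qq + bt'*P + gm'*Qp"
    using Suc.IH by (simp_all add: P_def Qp_def R_def Qq_def mult.assoc)
  have T1: "T1 k = T0 k - ((1 - bt)*R + bt*P + gm*Qp)" using IH(3) by simp
  have e: "p^Suc k = p*P" "real (Suc k)*p^(Suc k - 1) = P + p*Qp"
          "q^Suc k = q*R" "real (Suc k)*q^(Suc k - 1) = R + q*Qq"
    unfolding P_def Qp_def R_def Qq_def by (simp, rule Qstep, simp, rule Qstep)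
  define Dd where "Dd = 2*p - 2*q"
  note g1 = g1[folded Dd_def] and g2 = g2[folded Dd_def] and g3 = g3[folded Dd_def] and g4 = g4[folded Dd_def]
  have a0: "A0 (Suc k) = p^Suc k + real (Suc k)*Ha*p^(Suc k - 1)"
  proof -
    have "A0 (Suc k) = p*P + Ha*(P + p*Qp)" unfolding rA0 IH by (simp add: algebra_simps)
    moreover have "p^Suc k + real (Suc k)*Ha*p^(Suc k - 1) = p*P + Ha*(P + p*Qp)"
      unfolding e(1) e(2)[symmetric] by (simp only: mult_ac)
    ultimately show ?thesis by simp
  qed
  have a1: "A1 (Suc k) = real (Suc k)*Ha*p^(Suc k - 1)"
  proof -
    have "A1 (Suc k) = Ha*(P + p*Qp)" unfolding rA1 IH by (simp add: algebra_simps)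
    moreover have "real (Suc k)*Ha*p^(Suc k - 1) = Ha*(P + p*Qp)"
      unfolding e(2)[symmetric] by (simp only: mult_ac)
    ultimately show ?thesis by (simp only:)
  qed
  have v: "T0 (Suc k) - T1 (Suc k) = (1 - bt)*q^Suc k + bt*p^Suc k + gm*(real (Suc k)*p^(Suc k - 1))"
  proof -
    have "(T0 (Suc k) - T1 (Suc k)) - ((1 - bt)*(q*R) + bt*(p*P) + gm*(P + p*Qp))
        = - (P*(bt*Dd - (p + (1 - w)*Ha - 2*gm))/2 + Qp*(gm*Dd - (1 - w)*Ha*p)/2)"
      unfolding rT0 rT1 T1 IH(1,2,4) by (simp add: Dd_def field_simps)
    also have "\<dots> = 0" unfolding g1 g2 by simp
    finally show ?thesis unfolding e by simp
  qed
  have t: "T0 (Suc k) = (1 - bt')*q^Suc k + (Ht*(1-bt)/2)*(real (Suc k)*q^(Suc k - 1)) + bt'*p^Suc k + gm'*(real (Suc k)*p^(Suc k - 1))"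
  proof -
    have "T0 (Suc k) - ((1 - bt')*(q*R) + (Ht*(1-bt)/2)*(R + q*Qq) + bt'*(p*P) + gm'*(P + p*Qp))
        = - (P*(bt'*Dd - (Ht*bt + p + Ha - 2*gm'))/2 + Qp*(gm'*Dd - (Ht*gm + Ha*p))/2)"
      unfolding rT0 T1 IH(1,2,4) by (simp add: Dd_def field_simps)
    also have "\<dots> = 0" unfolding g3 g4 by simp
    finally show ?thesis unfolding e by simp
  qed
  show ?case using a0 a1 v t by simp
qed

lemma coef:
  fixes Ga Gt Ha Ht psi nr gm bt gm' bt' :: real
  assumes D0: "2*Ga - Gt \<noteq> 0" and Gt0: "Gt \<noteq> 0"
    and h1: "gm * (2*Ga - Gt) = psi*Ha*Ga"
    and h2: "bt * (2*Ga - Gt) = Ga + psi*Ha - 2*gm"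
    and h3: "gm' * (2*Ga - Gt) = Ht*gm + Ha*Ga"
    and h4: "bt' * (2*Ga - Gt) = Ht*bt + Ga + Ha - 2*gm'"
  defines "D \<equiv> 2*Ga - Gt"
  defines "II \<equiv> (Ha + Ht + Ga + Gt) / 2"
  defines "I \<equiv> Gt / 2 + Ha * psi / 2 + Ga / 2"
  defines "C1 \<equiv> I - Ga / D * (Ga + Ha * psi * (1 - Gt / D))"
  defines "C2 \<equiv> Ha * psi / D"
  defines "C3 \<equiv> (Ha * psi + Ga) / D - 2 * Ha * Ga * psi / D^2"
  shows "(1 - bt')*(Gt/2) + (Ht*(1-bt)/2)*nr = 2*Ga*Ha*(Gt-Ga)/D^2 - Ga^2/D + (nr - 1)*C1*Ht/Gt - Ga*Ht/D*(C3 - C2*Gt/D) + II"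
    and "(bt' - 1)*Ga + (gm' - Ha)*nr = (nr*Ha + Ga)*(Gt-Ga)/D - Ga*Gt*Ha/D^2 + Ga*Ht*C2*nr/D + Gt*Ht/D*((C3-C2)/2 - Ga*C2/D) + Ht*(C3-C2)/2"
proof -
  have D: "D \<noteq> 0" using D0 by (simp add: D_def)
  define E where "E = inverse D"
  define F where "F = inverse Gt"
  have E: "E * (2*Ga - Gt) = 1" using D by (simp add: E_def D_def[symmetric])
  have F: "F * Gt = 1" using Gt0 by (simp add: F_def)
  have dv: "\<And>x. x / D = x * E" "\<And>x. x / D^2 = x * E^2" "\<And>x. x / Gt = x * F"
    by (simp_all add: E_def F_def divide_inverse power_inverse)
  have gm: "gm = psi*Ha*Ga*E" using h1 E by algebra
  have bt: "bt = (Ga + psi*Ha - 2*gm)*E" using h2 E by algebra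
  have gm': "gm' = (Ht*gm + Ha*Ga)*E" using h3 E by algebra
  have bt': "bt' = (Ht*bt + Ga + Ha - 2*gm')*E" using h4 E by algebra
  show "(1 - bt')*(Gt/2) + (Ht*(1-bt)/2)*nr = 2*Ga*Ha*(Gt-Ga)/D^2 - Ga^2/D + (nr - 1)*C1*Ht/Gt - Ga*Ht/D*(C3 - C2*Gt/D) + II"
    unfolding bt' gm' bt gm II_def C1_def C2_def C3_def I_def dv
    using E F by algebra
  show "(bt' - 1)*Ga + (gm' - Ha)*nr = (nr*Ha + Ga)*(Gt-Ga)/D - Ga*Gt*Ha/D^2 + Ga*Ht*C2*nr/D + Gt*Ht/D*((C3-C2)/2 - Ga*C2/D) + Ht*(C3-C2)/2"
    unfolding bt' gm' bt gm II_def C1_def C2_def C3_def I_def dv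
    using E F by algebra
qed

theorem mainTheorem13:
  fixes \<alpha> a t :: real and \<nu> :: "real measure"
  assumes "\<alpha> > 0"
    and "prob_space \<nu>" and "sets \<nu> = sets borel"
    and "\<forall>A\<in>sets borel. measure \<nu> (uminus ` A) = measure \<nu> A"
    and "measure \<nu> {0} = 0"
    and "0 < a" and "a < t"
    and "measure \<nu> {a} = 0" and "measure \<nu> {t} = 0"
    and "Gd \<alpha> \<nu> t \<noteq> 2 * Gd \<alpha> \<nu> a"
  shows "let G = Gd \<alpha> \<nu>; H = Hd \<alpha> \<nu>; D = 2 * G a - G t;
             psi = Psi \<alpha> (a / t);
             II = (H a + H t + G a + G t) / 2;
             I = G t / 2 + H a * psi / 2 + G a / 2;
             C1 = I - G a / D * (G a + H a * psi * (1 - G t / D));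
             C2 = H a * psi / D;
             C3 = (H a * psi + G a) / D - 2 * H a * G a * psi / D^2
         in Phi \<alpha> \<nu> a 1 t = Fd \<nu> t - Fd \<nu> a
          \<and> (\<forall>n::nat. n \<ge> 2 \<longrightarrow>
               Phi \<alpha> \<nu> a n t =
                 (G t / 2) ^ (n - 1) *
                   (2 * G a * H a * (G t - G a) / D^2 - G a ^ 2 / D
                    + real (n - 1) * C1 * H t / G t
                    - G a * H t / D * (C3 - C2 * G t / D) + II)
               + G a ^ (n - 1) *
                   ((real n * H a + G a) * (G t - G a) / D
                    - G a * G t * H a / D^2
                    + G a * H t * C2 * real n / D
                    + G t * H t / D * ((C3 - C2) / 2 - G a * C2 / D)
                    + H t * (C3 - C2) / 2))"
proof -
  interpret kset \<alpha> \<nu> by (rule kset.intro[OF assms(1) assms(2) assms(3)])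
  have a0: "0 < a" and at: "a < t" using assms by auto
  have t0: "0 < t" using a0 at by simp
  have sym: "\<forall>A\<in>sets borel. measure \<nu> (uminus ` A) = measure \<nu> A" using assms(4) .
  define p where "p = Gd \<alpha> \<nu> a"
  define Gt where "Gt = Gd \<alpha> \<nu> t"
  define Ha where "Ha = Hd \<alpha> \<nu> a"
  define Ht where "Ht = Hd \<alpha> \<nu> t"
  define psi where "psi = Psi \<alpha> (a/t)"
  have NNa: "NN a = p + Ha" and JJa: "JJ a = Ha"
    using Gd_eq[OF a0] Hd_eq[OF a0 sym] by (simp_all add: p_def Ha_def)
  have NNt: "NN t = Gt + Ht" and JJt: "JJ t = Ht"
    using Gd_eq[OF t0] Hd_eq[OF t0 sym] by (simp_all add: Gt_def Ht_def)
  have w: "(a/t) powr \<alpha> = 1 - psi"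
    using Psi_eq[OF assms(1) t0, of a] a0 at by (simp add: psi_def e0_def e1_def)
  have D0: "2*p - Gt \<noteq> 0" using assms(10) by (simp add: p_def Gt_def)
  have Gt0: "Gt \<noteq> 0"
  proof
    assume "Gt = 0"
    moreover have "0 \<le> p" "p \<le> Gt" using Gd_mono[OF a0 less_imp_le[OF at]] by (simp_all add: p_def Gt_def)
    ultimately show False using D0 by simp
  qed
  define A0 where "A0 = (\<lambda>k. integral\<^sup>L (Bm a k) (e0 a))"
  define A1 where "A1 = (\<lambda>k. integral\<^sup>L (Bm a k) (e1 \<alpha> a))"
  define T0 where "T0 = (\<lambda>k. integral\<^sup>L (Bm a k) (e0 t))"
  define T1 where "T1 = (\<lambda>k. integral\<^sup>L (Bm a k) (e1 \<alpha> t))"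
  have i: "A0 0 = 1" "A1 0 = 0" "T0 0 = 1" "T1 0 = 0"
    using a0 t0 by (simp_all add: A0_def A1_def T0_def T1_def integral_return e0_def e1_def)
  have rA0: "A0 (Suc k) = (p + Ha) * A0 k - Ha * A1 k" for k
    using rec_e0[OF a0 order_refl, of k] unfolding A0_def A1_def NNa JJa by (simp add: algebra_simps)
  have rA1: "A1 (Suc k) = (p - Ha) * A1 k + Ha * A0 k" for k
    using rec_e1[OF a0 order_refl, of k] a0 unfolding A0_def A1_def NNa JJa by (simp add: algebra_simps)
  have rT0: "T0 (Suc k) = ((2*(Gt/2) + Ht) * T0 k - Ht * T1 k + ((p + Ha) * A0 k - Ha * A1 k)) / 2" for k
    using rec_e0[OF a0 less_imp_le[OF at], of k] unfolding A0_def A1_def T0_def T1_def NNa JJa NNt JJt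
    by (simp add: field_simps)
  have rT1: "T1 (Suc k) = ((2*(Gt/2) - Ht) * T1 k + Ht * T0 k + (a/t) powr \<alpha> * ((p - Ha) * A1 k + Ha * A0 k)) / 2" for k
    using rec_e1[OF a0 less_imp_le[OF at], of k] unfolding A0_def A1_def T0_def T1_def NNa JJa NNt JJt
    by (simp add: field_simps)
  define gm where "gm = psi*Ha*p/(2*p - Gt)"
  define bt where "bt = (p + psi*Ha - 2*gm)/(2*p - Gt)"
  define gm' where "gm' = (Ht*gm + Ha*p)/(2*p - Gt)"
  define bt' where "bt' = (Ht*bt + p + Ha - 2*gm')/(2*p - Gt)"
  have h1: "gm * (2*p - Gt) = psi*Ha*p" using D0 by (simp add: gm_def)
  have h2: "bt * (2*p - Gt) = p + psi*Ha - 2*gm" using D0 by (simp add: bt_def)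
  have h3: "gm' * (2*p - Gt) = Ht*gm + Ha*p" using D0 by (simp add: gm'_def)
  have h4: "bt' * (2*p - Gt) = Ht*bt + p + Ha - 2*gm'" using D0 by (simp add: bt'_def)
  have cl: "A0 k = p^k + real k*Ha*p^(k-1) \<and> A1 k = real k*Ha*p^(k-1) \<and>
         T0 k - T1 k = (1 - bt)*(Gt/2)^k + bt*p^k + gm*(real k*p^(k-1)) \<and>
         T0 k = (1 - bt')*(Gt/2)^k + (Ht*(1-bt)/2)*(real k*(Gt/2)^(k-1)) + bt'*p^k + gm'*(real k*p^(k-1))" for k
    by (rule closed[where w="(a/t) powr \<alpha>"])
       (use h1 h2 h3 h4 w i rA0 rA1 rT0 rT1 in simp_all)
  have phi: "Phi \<alpha> \<nu> a (Suc m) t = T0 (Suc m) - A0 (Suc m)" for m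
    using phi_int[OF a0 at, of "Suc m"] rT0[of m] rA0[of m]
    unfolding A0_def A1_def T0_def T1_def NNa JJa NNt JJt by (simp add: field_simps)
  show ?thesis
    unfolding Let_def p_def[symmetric] Gt_def[symmetric] Ha_def[symmetric] Ht_def[symmetric] psi_def[symmetric]
  proof (intro conjI allI impI)
    show "Phi \<alpha> \<nu> a 1 t = Fd \<nu> t - Fd \<nu> a"
    proof -
      have "Phi \<alpha> \<nu> a 1 t = T0 1 - A0 1" using phi[of 0] by simp
      also have "T0 1 = (Gt + Ht + (p + Ha)) / 2" using rT0[of 0] i by simp
      also have "A0 1 = p + Ha" using rA0[of 0] i by simp
      finally have "Phi \<alpha> \<nu> a 1 t = ((Gt + Ht) - (p + Ha)) / 2" by simp
      then show ?thesis using NN_F[OF a0 sym] NN_F[OF t0 sym] NNa NNt by simp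
    qed
  next
    fix n :: nat assume n2: "2 \<le> n"
    then obtain m where nm: "n = Suc m" by (cases n) auto
    have rn: "real (n - 1) = real n - 1" using n2 by simp
    have c: "(1 - bt')*(Gt/2) + (Ht*(1-bt)/2)*real n = 2*p*Ha*(Gt-p)/(2*p - Gt)^2 - p^2/(2*p - Gt) + (real n - 1)*((Gt / 2 + Ha * psi / 2 + p / 2) - p / (2*p - Gt) * (p + Ha * psi * (1 - Gt / (2*p - Gt))))*Ht/Gt - p*Ht/(2*p - Gt)*(((Ha * psi + p) / (2*p - Gt) - 2 * Ha * p * psi / (2*p - Gt)^2) - (Ha * psi / (2*p - Gt))*Gt/(2*p - Gt)) + (Ha + Ht + p + Gt) / 2"
         "(bt' - 1)*p + (gm' - Ha)*real n = (real n*Ha + p)*(Gt-p)/(2*p - Gt) - p*Gt*Ha/(2*p - Gt)^2 + p*Ht*(Ha * psi / (2*p - Gt))*real n/(2*p - Gt) + Gt*Ht/(2*p - Gt)*((((Ha * psi + p) / (2*p - Gt) - 2 * Ha * p * psi / (2*p - Gt)^2)-(Ha * psi / (2*p - Gt)))/2 - p*(Ha * psi / (2*p - Gt))/(2*p - Gt)) + Ht*(((Ha * psi + p) / (2*p - Gt) - 2 * Ha * p * psi / (2*p - Gt)^2)-(Ha * psi / (2*p - Gt)))/2"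
      by (rule coef[OF D0 Gt0 h1 h2 h3 h4])+
    have "Phi \<alpha> \<nu> a n t = T0 n - A0 n" unfolding nm by (rule phi)
    also have "\<dots> = (Gt/2)^(n-1) * ((1 - bt')*(Gt/2) + (Ht*(1-bt)/2)*real n) + p^(n-1) * ((bt' - 1)*p + (gm' - Ha)*real n)"
    proof -
      define Q where "Q = (Gt/2)^m"
      define P where "P = p^m"
      have T: "T0 n = (1 - bt')*(Gt/2*Q) + (Ht*(1-bt)/2)*(real n*Q) + bt'*(p*P) + gm'*(real n*P)"
        using cl[of n] unfolding nm power_Suc diff_Suc_1 Q_def[symmetric] P_def[symmetric] by (simp only:)
      have A: "A0 n = p*P + real n*Ha*P"
        using cl[of n] unfolding nm power_Suc diff_Suc_1 Q_def[symmetric] P_def[symmetric] by (simp only:)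
      have "T0 n - A0 n = Q * ((1 - bt')*(Gt/2) + (Ht*(1-bt)/2)*real n) + P * ((bt' - 1)*p + (gm' - Ha)*real n)"
        unfolding T A by (simp add: algebra_simps)
      then show ?thesis unfolding Q_def P_def nm diff_Suc_1 .
    qed
    finally show "Phi \<alpha> \<nu> a n t = (Gt / 2) ^ (n - 1) *
                   (2 * p * Ha * (Gt - p) / (2 * p - Gt)^2 - p ^ 2 / (2 * p - Gt)
                    + real (n - 1) * ((Gt / 2 + Ha * psi / 2 + p / 2) - p / (2 * p - Gt) * (p + Ha * psi * (1 - Gt / (2 * p - Gt)))) * Ht / Gt
                    - p * Ht / (2 * p - Gt) * (((Ha * psi + p) / (2 * p - Gt) - 2 * Ha * p * psi / (2 * p - Gt)^2) - (Ha * psi / (2 * p - Gt)) * Gt / (2 * p - Gt)) + (Ha + Ht + p + Gt) / 2)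
               + p ^ (n - 1) *
                   ((real n * Ha + p) * (Gt - p) / (2 * p - Gt)
                    - p * Gt * Ha / (2 * p - Gt)^2
                    + p * Ht * (Ha * psi / (2 * p - Gt)) * real n / (2 * p - Gt)
                    + Gt * Ht / (2 * p - Gt) * ((((Ha * psi + p) / (2 * p - Gt) - 2 * Ha * p * psi / (2 * p - Gt)^2) - (Ha * psi / (2 * p - Gt))) / 2 - p * (Ha * psi / (2 * p - Gt)) / (2 * p - Gt))
                    + Ht * (((Ha * psi + p) / (2 * p - Gt) - 2 * Ha * p * psi / (2 * p - Gt)^2) - (Ha * psi / (2 * p - Gt))) / 2)"
      unfolding c rn .
  qed
qed

end
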